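(* Let $p\in(0,1)$, $\mu_p=(1-p)\delta_{-1}+p\delta_1$, $h_0=2p-1$, and let $\mathcal{U}$ be the uniform probability measure on $[-1,1]$. Define $I_p(x)=\frac{1+x}{2}\log\frac{1+x}{2p}+\frac{1-x}{2}\log\frac{1-x}{2(1-p)}$ for $x\in[-1,1]$ (and $+\infty$ otherwise), and the cost $w_p:\{-1,1\}^n\times[-1,1]^n\to[0,+\infty]$, $$w_p(x,u)=\sum_{i=1}^n 2\,|I_p'(u_i)|\,\mathbf{1}_{x_i(h_0-u_i)<0}.$$ Then for every probability measure $\nu$ on $\{-1,1\}^n$, $$\mathcal{W}_{w_p}(\nu,\mathcal{U}^n)\le H(\nu\,|\,\mu_p^n),$$ and equality holds if $\nu$ is a product measure.
   Context: $\mathcal{W}_c(\nu,\tilde\mu)=\inf_\pi\int c(x,u)\,d\pi(x,u)$, the infimum over couplings $\pi$ of $\nu$ and $\tilde\mu$. $H(\nu|\mu)$ is the relative entropy ($\int\log\frac{d\nu}{d\mu}d\nu$ if $\nu\ll\mu$, $+\infty$ otherwise). $\mu_p^n$ and $\mathcal{U}^n$ denote $n$-fold products. *)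

theory Defs
  imports "HOL-Probability.Probability"
begin

definition mu_p :: "real \<Rightarrow> real measure" where
  "mu_p p = density (count_space {-1, 1}) (\<lambda>x. if x = 1 then ennreal p else ennreal (1 - p))"

definition unifU :: "real measure" where
  "unifU = uniform_measure lborel {-1..1}"

text \<open>The rate function I_p (real formula on [-1,1], with 0 log 0 = 0 at the endpoints).
  Only its derivative on the open interval (-1,1) is used.\<close>
definition Ip :: "real \<Rightarrow> real \<Rightarrow> real" where
  "Ip p x = (if x = -1 \<or> x = 1 then
               (if x = 1 then ln (1 / p) else ln (1 / (1 - p)))
             else (1 + x) / 2 * ln ((1 + x) / (2 * p)) + (1 - x) / 2 * ln ((1 - x) / (2 * (1 - p))))"

text \<open>The cost w_p(x,u) = sum_i 2 |I_p'(u_i)| 1_{x_i (h0 - u_i) < 0}, h0 = 2p-1, valued in [0,+oo].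
  At u_i = +-1 one has |I_p'(u_i)| = +oo (convention oo * 0 = 0).\<close>
definition wp :: "real \<Rightarrow> nat \<Rightarrow> (nat \<Rightarrow> real) \<Rightarrow> (nat \<Rightarrow> real) \<Rightarrow> ennreal" where
  "wp p n x u = (\<Sum>i<n.
      (if -1 < u i \<and> u i < 1 then ennreal (2 * \<bar>deriv (Ip p) (u i)\<bar>) else \<infinity>)
      * (if x i * ((2 * p - 1) - u i) < 0 then 1 else 0))"

definition couplings :: "'a measure \<Rightarrow> 'b measure \<Rightarrow> ('a \<times> 'b) measure set" where
  "couplings N M = {\<pi>. sets \<pi> = sets (N \<Otimes>\<^sub>M M) \<and> distr \<pi> N fst = N \<and> distr \<pi> M snd = M}"

definition transport_cost :: "('a \<Rightarrow> 'b \<Rightarrow> ennreal) \<Rightarrow> 'a measure \<Rightarrow> 'b measure \<Rightarrow> ennreal" where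
  "transport_cost c N M = (INF \<pi>\<in>couplings N M. \<integral>\<^sup>+ z. c (fst z) (snd z) \<partial>\<pi>)"

text \<open>Relative entropy H(nu|mu) = int log (dnu/dmu) dnu if nu << mu, +oo otherwise.
  (For probability measures the negative part of the integrand is always integrable,
  so a non-integrable integrand means the integral is +oo.)\<close>
definition rel_entropy :: "'a measure \<Rightarrow> 'a measure \<Rightarrow> ereal" where
  "rel_entropy \<nu> \<mu> =
     (if sets \<nu> = sets \<mu> \<and> absolutely_continuous \<mu> \<nu>
         \<and> integrable \<nu> (\<lambda>x. ln (enn2real (RN_deriv \<mu> \<nu> x)))
      then ereal (\<integral>x. ln (enn2real (RN_deriv \<mu> \<nu> x)) \<partial>\<nu>)
      else \<infinity>)"

end

theory Submission
  imports Defs "HOL-Real_Asymp.Real_Asymp"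
begin

definition hh :: "real \<Rightarrow> real \<Rightarrow> real" where "hh c y = y * ln (y / c)"
definition LL :: "real \<Rightarrow> real \<Rightarrow> real" where
  "LL p u = ln ((1 + u) / (2 * p)) - ln ((1 - u) / (2 * (1 - p)))"

lemma Ip_eq_hh:
  assumes "0 < p" "p < 1" "-1 \<le> x" "x \<le> 1"
  shows "Ip p x = hh p ((1 + x) / 2) + hh (1 - p) ((1 - x) / 2)"
proof -
  have "x = -1 \<or> x = 1 \<or> (-1 < x \<and> x < 1)" using assms by auto
  then show ?thesis
  proof (elim disjE)
    assume "x = -1" then show ?thesis using assms by (simp add: Ip_def hh_def)
  next
    assume "x = 1" then show ?thesis using assms by (simp add: Ip_def hh_def)
  next
    assume "-1 < x \<and> x < 1"
    then show ?thesis using assms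
      by (simp add: Ip_def hh_def field_simps)
  qed
qed

lemma cont_xlnx: "continuous_on {0..} (\<lambda>y::real. y * ln y)"
proof (subst continuous_on_eq_continuous_within, intro ballI)
  fix y :: real assume "y \<in> {0..}"
  show "continuous (at y within {0..}) (\<lambda>y. y * ln y)"
  proof (cases "y = 0")
    case True
    have "((\<lambda>x::real. x * ln x) \<longlongrightarrow> 0) (at_right 0)" by real_asymp
    then show ?thesis using True
      by (simp add: continuous_within at_within_Ici_at_right)
  next
    case False
    then have "y > 0" using \<open>y \<in> {0..}\<close> by auto
    then have "isCont (\<lambda>y. y * ln y) y"
      by (intro continuous_intros) auto
    then show ?thesis using continuous_at_imp_continuous_at_within by blast
  qed
qed

lemma hh_alt: assumes "c > 0" "y \<ge> 0" shows "hh c y = y * ln y - y * ln c"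
proof (cases "y = 0")
  case True then show ?thesis by (simp add: hh_def)
next
  case False then have "y > 0" using assms by auto
  then show ?thesis using assms by (simp add: hh_def ln_div right_diff_distrib)
qed
lemma cont_hh:
  assumes "c > 0"
  shows "continuous_on {0..} (hh c)"
proof -
  have "continuous_on {0..} (\<lambda>y::real. y * ln y - y * ln c)"
    by (intro continuous_on_diff cont_xlnx continuous_on_mult continuous_on_id continuous_on_const)
  then show ?thesis
    by (rule continuous_on_cong[THEN iffD1, rotated 2]) (use assms hh_alt in auto)
qed

lemma cont_Ip:
  assumes "0 < p" "p < 1"
  shows "continuous_on {-1..1} (Ip p)"
proof -
  have c1: "continuous_on {-1..1} (\<lambda>x. hh p ((1 + x) / 2))"
  proof (rule continuous_on_compose2[OF cont_hh[of p]])
    show "continuous_on {-1..1} (\<lambda>x::real. (1 + x) / 2)" by (intro continuous_intros) auto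
  qed (use assms in auto)
  have c2: "continuous_on {-1..1} (\<lambda>x. hh (1-p) ((1 - x) / 2))"
  proof (rule continuous_on_compose2[OF cont_hh[of "1-p"]])
    show "continuous_on {-1..1} (\<lambda>x::real. (1 - x) / 2)" by (intro continuous_intros) auto
  qed (use assms in auto)
  have "continuous_on {-1..1} (\<lambda>x. hh p ((1 + x) / 2) + hh (1-p) ((1 - x) / 2))"
    by (intro continuous_on_add c1 c2)
  then show ?thesis
    by (rule continuous_on_cong[THEN iffD1, rotated 2]) (use assms Ip_eq_hh in auto)
qed

lemma d1: assumes "c > 0" "y > 0"
  shows "((\<lambda>x::real. x * ln (x / c)) has_real_derivative (ln (y / c) + 1)) (at y)"
proof -
  have "((\<lambda>x::real. x * ln (x / c)) has_real_derivative (1 * ln (y / c) + y * ((1 / c) / (y / c)))) (at y)"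
    using assms by (intro derivative_eq_intros) auto
  moreover have "1 * ln (y / c) + y * ((1 / c) / (y / c)) = ln (y / c) + 1" using assms by simp
  ultimately show ?thesis by simp
qed

lemma Ip_deriv:
  assumes "0 < p" "p < 1" "-1 < u" "u < 1"
  shows "(Ip p has_real_derivative LL p u / 2) (at u)"
proof -
  have a: "((\<lambda>x. hh p ((1 + x) / 2)) has_real_derivative (ln (((1 + u) / 2) / p) + 1) * (1/2)) (at u)"
    unfolding hh_def
    by (rule DERIV_chain2[OF d1]) (use assms in \<open>auto intro!: derivative_eq_intros\<close>)
  have b: "((\<lambda>x. hh (1-p) ((1 - x) / 2)) has_real_derivative (ln (((1 - u) / 2) / (1-p)) + 1) * (-1/2)) (at u)"
    unfolding hh_def
    by (rule DERIV_chain2[OF d1]) (use assms in \<open>auto intro!: derivative_eq_intros\<close>)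
  have e: "(ln (((1 + u) / 2) / p) + 1) * (1/2) + (ln (((1 - u) / 2) / (1-p)) + 1) * (-1/2) = LL p u / 2"
    by (simp add: LL_def algebra_simps)
  have d: "((\<lambda>x. hh p ((1 + x) / 2) + hh (1-p) ((1 - x) / 2)) has_real_derivative LL p u / 2) (at u)"
    by (subst e[symmetric]) (rule DERIV_add[OF a b])
  show ?thesis
    by (rule has_field_derivative_transform_within_open[OF d, of "{-1<..<1}"])
       (use assms Ip_eq_hh in auto)
qed

lemma deriv_Ip:
  assumes "0 < p" "p < 1" "-1 < u" "u < 1"
  shows "deriv (Ip p) u = LL p u / 2"
  using Ip_deriv[OF assms] by (rule DERIV_imp_deriv)

lemma LL_mono:
  assumes "0 < p" "p < 1" "-1 < u" "u \<le> v" "v < 1"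
  shows "LL p u \<le> LL p v"
proof -
  have "ln ((1 + u) / (2 * p)) \<le> ln ((1 + v) / (2 * p))"
    using assms by (subst ln_le_cancel_iff) (auto simp: divide_right_mono)
  moreover have "ln ((1 - v) / (2 * (1 - p))) \<le> ln ((1 - u) / (2 * (1 - p)))"
    using assms by (subst ln_le_cancel_iff) (auto simp: divide_right_mono)
  ultimately show ?thesis unfolding LL_def by linarith
qed

lemma LL_h0: assumes "0 < p" "p < 1" shows "LL p (2*p-1) = 0"
  using assms by (simp add: LL_def)

lemma Ip_h0: assumes "0 < p" "p < 1" shows "Ip p (2*p-1) = 0"
  using assms by (simp add: Ip_def)

lemma LL_nonneg: assumes "0 < p" "p < 1" "2*p-1 \<le> u" "u < 1" shows "0 \<le> LL p u"
  using LL_mono[of p "2*p-1" u] assms LL_h0 by auto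

lemma LL_nonpos: assumes "0 < p" "p < 1" "-1 < u" "u \<le> 2*p-1" shows "LL p u \<le> 0"
  using LL_mono[of p u "2*p-1"] assms LL_h0 by auto

lemma LL_nonneg': assumes "0 < p" "p < 1" "2*p-1 \<le> u" "u \<le> 1" shows "0 \<le> LL p u"
proof (cases "u = 1")
  case True
  then show ?thesis using assms by (simp add: LL_def)
qed (use LL_nonneg assms in auto)

lemma LL_nonpos': assumes "0 < p" "p < 1" "-1 \<le> u" "u \<le> 2*p-1" shows "LL p u \<le> 0"
proof (cases "u = -1")
  case True
  then show ?thesis using assms by (simp add: LL_def)
qed (use LL_nonpos assms in auto)

lemma Ip_integral_pos:
  assumes "0 < p" "p < 1" "2*p-1 \<le> a" "a \<le> 1"
  shows "((\<lambda>u. LL p u / 2) has_integral Ip p a) {2*p-1..a}"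
proof -
  have "((\<lambda>u. LL p u / 2) has_integral Ip p a - Ip p (2*p-1)) {2*p-1..a}"
  proof (rule fundamental_theorem_of_calculus_interior)
    show "continuous_on {2*p-1..a} (Ip p)"
      by (rule continuous_on_subset[OF cont_Ip]) (use assms in auto)
    fix x assume "x \<in> {2*p-1<..<a}"
    then show "(Ip p has_vector_derivative LL p x / 2) (at x)"
      using Ip_deriv[of p x] assms by (auto simp: has_real_derivative_iff_has_vector_derivative)
  qed (use assms in auto)
  then show ?thesis using Ip_h0 assms by simp
qed

lemma Ip_integral_neg:
  assumes "0 < p" "p < 1" "-1 \<le> a" "a \<le> 2*p-1"
  shows "((\<lambda>u. - (LL p u / 2)) has_integral Ip p a) {a..2*p-1}"
proof -
  have "((\<lambda>u. LL p u / 2) has_integral Ip p (2*p-1) - Ip p a) {a..2*p-1}"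
  proof (rule fundamental_theorem_of_calculus_interior)
    show "continuous_on {a..2*p-1} (Ip p)"
      by (rule continuous_on_subset[OF cont_Ip]) (use assms in auto)
    fix x assume "x \<in> {a<..<2*p-1}"
    then show "(Ip p has_vector_derivative LL p x / 2) (at x)"
      using Ip_deriv[of p x] assms by (auto simp: has_real_derivative_iff_has_vector_derivative)
  qed (use assms in auto)
  then have "((\<lambda>u. - (LL p u / 2)) has_integral - (Ip p (2*p-1) - Ip p a)) {a..2*p-1}"
    by (rule has_integral_neg)
  then show ?thesis using Ip_h0 assms by simp
qed

lemma Ip_nonneg:
  assumes "0 < p" "p < 1" "-1 \<le> a" "a \<le> 1"
  shows "0 \<le> Ip p a"
proof (cases "2*p-1 \<le> a")
  case True
  show ?thesis
    by (rule has_integral_nonneg[OF Ip_integral_pos[OF assms(1,2) True assms(4)]])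
       (use assms LL_nonneg' in auto)
next
  case False
  show ?thesis
    by (rule has_integral_nonneg[OF Ip_integral_neg[OF assms(1,2,3)]])
       (use assms False LL_nonpos' in auto)
qed

definition Gc :: "real \<Rightarrow> real \<Rightarrow> ennreal" where
  "Gc p u = (if -1 < u \<and> u < 1 then ennreal \<bar>LL p u\<bar> else \<infinity>)"
definition cst :: "real \<Rightarrow> real \<Rightarrow> real \<Rightarrow> ennreal" where
  "cst p b u = Gc p u * (if b * ((2 * p - 1) - u) < 0 then 1 else 0)"

lemma wp_alt:
  assumes "0 < p" "p < 1"
  shows "wp p n x u = (\<Sum>i<n. cst p (x i) (u i))"
  unfolding wp_def cst_def Gc_def
  by (intro sum.cong refl) (simp add: deriv_Ip[OF assms])

lemma Gc_meas[measurable]: "Gc p \<in> borel_measurable borel"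
  unfolding Gc_def LL_def by measurable

lemma cst_meas[measurable]: "(\<lambda>(b, u). cst p b u) \<in> borel_measurable (borel \<Otimes>\<^sub>M borel)"
  unfolding cst_def by measurable

lemma Gc_h0: assumes "0 < p" "p < 1" shows "Gc p (2*p-1) = 0"
  using assms LL_h0[OF assms] by (simp add: Gc_def)

lemma sets_unifU[simp, measurable_cong]: "sets unifU = sets borel"
  by (simp add: unifU_def)

lemma space_unifU[simp]: "space unifU = UNIV"
  by (simp add: unifU_def)

lemma prob_unifU: "prob_space unifU"
  unfolding unifU_def by (rule prob_space_uniform_measure) auto

lemma emeasure_unifU:
  assumes "A \<in> sets borel"
  shows "emeasure unifU A = emeasure lborel ({-1..1} \<inter> A) / 2"
  using assms by (simp add: unifU_def)

lemma nn_unifU: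
  assumes [measurable]: "f \<in> borel_measurable borel"
  shows "(\<integral>\<^sup>+x. f x \<partial>unifU) = (\<integral>\<^sup>+x. f x * indicator {-1..1} x \<partial>lborel) / 2"
  unfolding unifU_def by (subst nn_integral_uniform_measure) auto

lemma ennreal_half2: assumes "0 \<le> x" shows "ennreal (x * 2) / 2 = ennreal x" "ennreal (2 * x) / 2 = ennreal x"
proof -
  have "ennreal (x * 2) / ennreal 2 = ennreal (x * 2 / 2)" using assms by (intro divide_ennreal) auto
  then show "ennreal (x * 2) / 2 = ennreal x" by simp
  then show "ennreal (2 * x) / 2 = ennreal x" by (simp add: mult.commute)
qed

lemma int_pos:
  assumes "0 < p" "p < 1" "2*p-1 \<le> a" "a \<le> 1"
  shows "(\<integral>\<^sup>+u. indicator {2*p-1..a} u * Gc p u \<partial>unifU) = ennreal (Ip p a)"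
proof -
  have "(\<integral>\<^sup>+u. indicator {2*p-1..a} u * Gc p u \<partial>unifU)
      = (\<integral>\<^sup>+u. indicator {2*p-1..a} u * Gc p u * indicator {-1..1} u \<partial>lborel) / 2"
    by (rule nn_unifU) measurable
  also have "(\<integral>\<^sup>+u. indicator {2*p-1..a} u * Gc p u * indicator {-1..1} u \<partial>lborel)
      = (\<integral>\<^sup>+u. ennreal (LL p u) * indicator {2*p-1..a} u \<partial>lborel)"
  proof (rule nn_integral_cong_AE)
    show "AE u in lborel. indicator {2*p-1..a} u * Gc p u * indicator {-1..1} u
        = ennreal (LL p u) * indicator {2*p-1..a} u"
      using AE_lborel_singleton[of 1]
    proof (rule eventually_mono)
      fix u :: real assume "u \<noteq> 1"
      show "indicator {2*p-1..a} u * Gc p u * indicator {-1..1} u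
        = ennreal (LL p u) * indicator {2*p-1..a} u"
      proof (cases "u \<in> {2*p-1..a}")
        case True
        then have "-1 < u" "u < 1" using assms \<open>u \<noteq> 1\<close> by auto
        moreover have "0 \<le> LL p u" using LL_nonneg True assms \<open>u < 1\<close> by auto
        ultimately show ?thesis using True by (simp add: Gc_def)
      qed simp
    qed
  qed
  also have "\<dots> = ennreal (2 * Ip p a)"
  proof (rule nn_integral_has_integral_lebesgue')
    show "\<And>x. x \<in> {2 * p - 1..a} \<Longrightarrow> 0 \<le> LL p x" using LL_nonneg' assms by auto
    have "((\<lambda>u. 2 * (LL p u / 2)) has_integral 2 * Ip p a) {2*p-1..a}"
      by (rule has_integral_mult_right[OF Ip_integral_pos[OF assms]])
    then show "(LL p has_integral 2 * Ip p a) {2 * p - 1..a}" by simp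
  qed
  also have "ennreal (2 * Ip p a) / 2 = ennreal (Ip p a)"
    using Ip_nonneg[of p a] assms ennreal_half2 by auto
  finally show ?thesis .
qed

lemma int_neg:
  assumes "0 < p" "p < 1" "-1 \<le> a" "a \<le> 2*p-1"
  shows "(\<integral>\<^sup>+u. indicator {a..2*p-1} u * Gc p u \<partial>unifU) = ennreal (Ip p a)"
proof -
  have "(\<integral>\<^sup>+u. indicator {a..2*p-1} u * Gc p u \<partial>unifU)
      = (\<integral>\<^sup>+u. indicator {a..2*p-1} u * Gc p u * indicator {-1..1} u \<partial>lborel) / 2"
    by (rule nn_unifU) measurable
  also have "(\<integral>\<^sup>+u. indicator {a..2*p-1} u * Gc p u * indicator {-1..1} u \<partial>lborel)
      = (\<integral>\<^sup>+u. ennreal (- (LL p u / 2) * 2) * indicator {a..2*p-1} u \<partial>lborel)"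
  proof (rule nn_integral_cong_AE)
    show "AE u in lborel. indicator {a..2*p-1} u * Gc p u * indicator {-1..1} u
        = ennreal (- (LL p u / 2) * 2) * indicator {a..2*p-1} u"
      using AE_lborel_singleton[of "-1"]
    proof (rule eventually_mono)
      fix u :: real assume "u \<noteq> -1"
      show "indicator {a..2*p-1} u * Gc p u * indicator {-1..1} u
        = ennreal (- (LL p u / 2) * 2) * indicator {a..2*p-1} u"
      proof (cases "u \<in> {a..2*p-1}")
        case True
        then have "-1 < u" "u < 1" using assms \<open>u \<noteq> -1\<close> by auto
        moreover have "LL p u \<le> 0" using LL_nonpos True assms \<open>-1 < u\<close> by auto
        ultimately show ?thesis using True by (simp add: Gc_def)
      qed simp
    qed
  qed
  also have "\<dots> = ennreal (Ip p a * 2)"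
  proof (rule nn_integral_has_integral_lebesgue')
    show "\<And>x. x \<in> {a..2 * p - 1} \<Longrightarrow> 0 \<le> - (LL p x / 2) * 2" using LL_nonpos' assms by auto
    show "((\<lambda>u. - (LL p u / 2) * 2) has_integral Ip p a * 2) {a..2*p-1}"
      by (rule has_integral_mult_left[OF Ip_integral_neg[OF assms]])
  qed
  also have "ennreal (Ip p a * 2) / 2 = ennreal (Ip p a)"
    using Ip_nonneg[of p a] assms ennreal_half2 by auto
  finally show ?thesis .
qed

lemma Gc_mono_pos:
  assumes "0 < p" "p < 1" "2*p-1 \<le> u" "u \<le> v"
  shows "Gc p u \<le> Gc p v"
proof (cases "v < 1")
  case True
  then have "0 \<le> LL p u" "LL p u \<le> LL p v" using assms LL_nonneg LL_mono[of p u v] by auto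
  then show ?thesis using assms True by (simp add: Gc_def)
next
  case False then show ?thesis by (simp add: Gc_def)
qed

lemma Gc_mono_neg:
  assumes "0 < p" "p < 1" "v \<le> 2*p-1" "u \<le> v"
  shows "Gc p v \<le> Gc p u"
proof (cases "-1 < u")
  case True
  then have "LL p v \<le> 0" "LL p u \<le> LL p v" using assms LL_nonpos LL_mono[of p u v] by auto
  then show ?thesis using assms True by (simp add: Gc_def)
next
  case False then show ?thesis by (simp add: Gc_def)
qed

lemma AE_unifU_neq: "AE x in unifU. x \<noteq> a"
  unfolding unifU_def
  by (rule AE_uniform_measureI) (auto intro: eventually_mono[OF AE_lborel_singleton[of a]])

lemma cost1_upper:
  assumes "0 < p" "p < 1" "0 \<le> q" "q \<le> 1"
  shows "(\<integral>\<^sup>+y. cst p (if y \<le> 2*q-1 then 1 else -1) y \<partial>unifU) = ennreal (Ip p (2*q-1))"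
proof (cases "2*p-1 \<le> 2*q-1")
  case True
  have "(\<integral>\<^sup>+y. cst p (if y \<le> 2*q-1 then 1 else -1) y \<partial>unifU)
      = (\<integral>\<^sup>+y. indicator {2*p-1..2*q-1} y * Gc p y \<partial>unifU)"
  proof (rule nn_integral_cong)
    fix y :: real
    show "cst p (if y \<le> 2*q-1 then 1 else -1) y = indicator {2*p-1..2*q-1} y * Gc p y"
      using True Gc_h0[OF assms(1,2)] by (cases "y = 2*p-1") (auto simp: cst_def indicator_def)
  qed
  also have "\<dots> = ennreal (Ip p (2*q-1))"
    using int_pos[of p "2*q-1"] assms True by auto
  finally show ?thesis .
next
  case False
  have "(\<integral>\<^sup>+y. cst p (if y \<le> 2*q-1 then 1 else -1) y \<partial>unifU)
      = (\<integral>\<^sup>+y. indicator {2*q-1..2*p-1} y * Gc p y \<partial>unifU)"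
  proof (rule nn_integral_cong_AE)
    show "AE y in unifU. cst p (if y \<le> 2*q-1 then 1 else -1) y = indicator {2*q-1..2*p-1} y * Gc p y"
      using AE_unifU_neq[of "2*q-1"]
    proof (rule eventually_mono)
      fix y :: real assume "y \<noteq> 2*q-1"
      then show "cst p (if y \<le> 2*q-1 then 1 else -1) y = indicator {2*q-1..2*p-1} y * Gc p y"
        using False Gc_h0[OF assms(1,2)] by (cases "y = 2*p-1") (auto simp: cst_def indicator_def)
    qed
  qed
  also have "\<dots> = ennreal (Ip p (2*q-1))"
    using int_neg[of p "2*q-1"] assms False by auto
  finally show ?thesis .
qed

lemma cost1_lower:
  assumes p: "0 < p" "p < 1" and q: "0 \<le> q" "q \<le> 1"
    and Xv: "\<And>z. z \<in> space M \<Longrightarrow> X z \<in> {-1, 1}"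
    and Xm[measurable]: "X \<in> borel_measurable M" and Ym[measurable]: "Y \<in> borel_measurable M"
    and Ymarg: "\<And>f. f \<in> borel_measurable borel \<Longrightarrow> (\<integral>\<^sup>+z. f (Y z) \<partial>M) = (\<integral>\<^sup>+u. f u \<partial>unifU)"
    and m1: "emeasure M {z\<in>space M. X z = 1} = ennreal q"
    and m0: "emeasure M {z\<in>space M. X z = -1} = ennreal (1 - q)"
  shows "ennreal (Ip p (2*q-1)) \<le> (\<integral>\<^sup>+z. cst p (X z) (Y z) \<partial>M)"
proof (cases "2*p-1 \<le> 2*q-1")
  case True
  define a where "a = 2*q-1"
  define K where "K = Gc p a"
  have a: "2*p-1 \<le> a" "a \<le> 1" "-1 \<le> a" using True q p by (auto simp: a_def)
  define psi where "psi u = indicator {2*p-1..a} u * Gc p u + K * indicator {a<..} u" for u :: real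
  have psim[measurable]: "psi \<in> borel_measurable borel" unfolding psi_def by measurable
  have Kfin: "K * ennreal (1 - q) \<noteq> \<infinity>"
  proof (cases "a < 1")
    case True
    then have "-1 < a" using a p by auto
    then show ?thesis using True by (simp add: K_def Gc_def ennreal_mult_eq_top_iff)
  next
    case False
    then have "q = 1" using a a_def by auto
    then show ?thesis by simp
  qed
  have pw: "psi (Y z) \<le> cst p (X z) (Y z) + K * indicator {-1} (X z)" if "z \<in> space M" for z
  proof -
    have "X z = 1 \<or> X z = -1" using Xv[OF that] by auto
    then show ?thesis
    proof
      assume X1: "X z = 1"
      consider "Y z < 2*p-1" | "Y z = 2*p-1" | "2*p-1 < Y z \<and> Y z \<le> a" | "a < Y z" by linarith
      then show ?thesis
      proof cases
        case 1 then show ?thesis using X1 a by (simp add: psi_def indicator_def)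
      next
        case 2 then show ?thesis using X1 a Gc_h0[OF p] by (simp add: psi_def indicator_def)
      next
        case 3 then show ?thesis using X1 a by (simp add: psi_def indicator_def cst_def)
      next
        case 4
        then have "K \<le> Gc p (Y z)" unfolding K_def using Gc_mono_pos[OF p, of a "Y z"] a by auto
        then show ?thesis using 4 X1 a by (simp add: psi_def indicator_def cst_def)
      qed
    next
      assume X0: "X z = -1"
      have "psi (Y z) \<le> K"
      proof (cases "Y z \<in> {2*p-1..a}")
        case True
        then have "Gc p (Y z) \<le> K" unfolding K_def using Gc_mono_pos[OF p, of "Y z" a] by auto
        then show ?thesis using True by (simp add: psi_def indicator_def)
      qed (auto simp: psi_def indicator_def)
      then show ?thesis using X0 by (simp add: add_increasing)
    qed
  qed
  have "ennreal (Ip p a) + K * ennreal (1 - q) = (\<integral>\<^sup>+u. psi u \<partial>unifU)"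
  proof -
    have "(\<integral>\<^sup>+u. psi u \<partial>unifU) = (\<integral>\<^sup>+u. indicator {2*p-1..a} u * Gc p u \<partial>unifU)
        + (\<integral>\<^sup>+u. K * indicator {a<..} u \<partial>unifU)"
      unfolding psi_def by (rule nn_integral_add) measurable
    also have "(\<integral>\<^sup>+u. indicator {2*p-1..a} u * Gc p u \<partial>unifU) = ennreal (Ip p a)"
      using int_pos[OF p a(1,2)] .
    also have "(\<integral>\<^sup>+u. K * indicator {a<..} u \<partial>unifU) = K * emeasure unifU {a<..}"
      by (rule nn_integral_cmult_indicator) simp
    also have "emeasure unifU {a<..} = ennreal (1 - q)"
    proof -
      have "{-1..1} \<inter> {a<..} = {a<..1::real}" using a by auto
      then have "emeasure unifU {a<..} = ennreal (1 - a) / 2"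
        using a by (simp add: emeasure_unifU)
      also have "\<dots> = ennreal (1 - q)"
        using ennreal_half2(1)[of "1-q"] q by (simp add: a_def algebra_simps)
      finally show ?thesis .
    qed
    finally show ?thesis by simp
  qed
  also have "\<dots> = (\<integral>\<^sup>+z. psi (Y z) \<partial>M)" by (rule Ymarg[symmetric]) (rule psim)
  also have "\<dots> \<le> (\<integral>\<^sup>+z. cst p (X z) (Y z) + K * indicator {-1} (X z) \<partial>M)"
    by (rule nn_integral_mono) (rule pw)
  also have "\<dots> = (\<integral>\<^sup>+z. cst p (X z) (Y z) \<partial>M) + (\<integral>\<^sup>+z. K * indicator {-1} (X z) \<partial>M)"
    by (rule nn_integral_add) measurable
  also have "(\<integral>\<^sup>+z. K * indicator {-1} (X z) \<partial>M) = (\<integral>\<^sup>+z. K * indicator {z\<in>space M. X z = -1} z \<partial>M)"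
    by (rule nn_integral_cong) (simp add: indicator_def)
  also have "\<dots> = K * ennreal (1 - q)"
    by (subst nn_integral_cmult_indicator) (simp_all add: m0)
  finally have "ennreal (Ip p a) + K * ennreal (1 - q) \<le> (\<integral>\<^sup>+z. cst p (X z) (Y z) \<partial>M) + K * ennreal (1 - q)" .
  then show ?thesis using Kfin unfolding a_def
    by (metis add.commute ennreal_add_left_cancel_le)
next
  case False
  define a where "a = 2*q-1"
  define K where "K = Gc p a"
  have a: "a \<le> 2*p-1" "a \<le> 1" "-1 \<le> a" using False q p by (auto simp: a_def)
  define psi where "psi u = indicator {a..2*p-1} u * Gc p u + K * indicator {..<a} u" for u :: real
  have psim[measurable]: "psi \<in> borel_measurable borel" unfolding psi_def by measurable
  have Kfin: "K * ennreal q \<noteq> \<infinity>"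
  proof (cases "-1 < a")
    case True
    then have "a < 1" using a p by auto
    then show ?thesis using True by (simp add: K_def Gc_def ennreal_mult_eq_top_iff)
  next
    case False
    then have "q = 0" using a a_def by auto
    then show ?thesis by simp
  qed
  have pw: "psi (Y z) \<le> cst p (X z) (Y z) + K * indicator {1} (X z)" if "z \<in> space M" for z
  proof -
    have "X z = 1 \<or> X z = -1" using Xv[OF that] by auto
    then show ?thesis
    proof
      assume X0: "X z = -1"
      consider "2*p-1 < Y z" | "Y z = 2*p-1" | "a \<le> Y z \<and> Y z < 2*p-1" | "Y z < a" by linarith
      then show ?thesis
      proof cases
        case 1 then show ?thesis using X0 a by (simp add: psi_def indicator_def)
      next
        case 2 then show ?thesis using X0 a Gc_h0[OF p] by (simp add: psi_def indicator_def)
      next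
        case 3 then show ?thesis using X0 a by (simp add: psi_def indicator_def cst_def)
      next
        case 4
        then have "K \<le> Gc p (Y z)" unfolding K_def using Gc_mono_neg[OF p, of a "Y z"] a by auto
        then show ?thesis using 4 X0 a by (simp add: psi_def indicator_def cst_def)
      qed
    next
      assume X1: "X z = 1"
      have "psi (Y z) \<le> K"
      proof (cases "Y z \<in> {a..2*p-1}")
        case True
        then have "Gc p (Y z) \<le> K" unfolding K_def using Gc_mono_neg[OF p, of "Y z" a] by auto
        then show ?thesis using True by (simp add: psi_def indicator_def)
      qed (auto simp: psi_def indicator_def)
      then show ?thesis using X1 by (simp add: add_increasing)
    qed
  qed
  have "ennreal (Ip p a) + K * ennreal q = (\<integral>\<^sup>+u. psi u \<partial>unifU)"
  proof -
    have "(\<integral>\<^sup>+u. psi u \<partial>unifU) = (\<integral>\<^sup>+u. indicator {a..2*p-1} u * Gc p u \<partial>unifU)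
        + (\<integral>\<^sup>+u. K * indicator {..<a} u \<partial>unifU)"
      unfolding psi_def by (rule nn_integral_add) measurable
    also have "(\<integral>\<^sup>+u. indicator {a..2*p-1} u * Gc p u \<partial>unifU) = ennreal (Ip p a)"
      using int_neg[OF p a(3,1)] .
    also have "(\<integral>\<^sup>+u. K * indicator {..<a} u \<partial>unifU) = K * emeasure unifU {..<a}"
      by (rule nn_integral_cmult_indicator) simp
    also have "emeasure unifU {..<a} = ennreal q"
    proof -
      have "{-1..1} \<inter> {..<a} = {-1..<a::real}" using a by auto
      then have "emeasure unifU {..<a} = ennreal (a + 1) / 2"
        using a by (simp add: emeasure_unifU)
      also have "\<dots> = ennreal q"
        using ennreal_half2(1)[of "q"] q by (simp add: a_def algebra_simps)
      finally show ?thesis .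
    qed
    finally show ?thesis by simp
  qed
  also have "\<dots> = (\<integral>\<^sup>+z. psi (Y z) \<partial>M)" by (rule Ymarg[symmetric]) (rule psim)
  also have "\<dots> \<le> (\<integral>\<^sup>+z. cst p (X z) (Y z) + K * indicator {1} (X z) \<partial>M)"
    by (rule nn_integral_mono) (rule pw)
  also have "\<dots> = (\<integral>\<^sup>+z. cst p (X z) (Y z) \<partial>M) + (\<integral>\<^sup>+z. K * indicator {1} (X z) \<partial>M)"
    by (rule nn_integral_add) measurable
  also have "(\<integral>\<^sup>+z. K * indicator {1} (X z) \<partial>M) = (\<integral>\<^sup>+z. K * indicator {z\<in>space M. X z = 1} z \<partial>M)"
    by (rule nn_integral_cong) (simp add: indicator_def)
  also have "\<dots> = K * ennreal q"
    by (subst nn_integral_cmult_indicator) (simp_all add: m1)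
  finally have "ennreal (Ip p a) + K * ennreal q \<le> (\<integral>\<^sup>+z. cst p (X z) (Y z) \<partial>M) + K * ennreal q" .
  then show ?thesis using Kfin unfolding a_def
    by (metis add.commute ennreal_add_left_cancel_le)
qed

definition Xs :: "nat \<Rightarrow> (nat \<Rightarrow> real) set" where
  "Xs n = PiE {..<n} (\<lambda>_. {-1, 1})"
definition mprod :: "real \<Rightarrow> nat \<Rightarrow> (nat \<Rightarrow> real) \<Rightarrow> real" where
  "mprod p n x = (\<Prod>i<n. if x i = 1 then p else 1 - p)"
definition Hf :: "real \<Rightarrow> nat \<Rightarrow> ((nat \<Rightarrow> real) \<Rightarrow> real) \<Rightarrow> real" where
  "Hf p n f = (\<Sum>x\<in>Xs n. f x * ln (f x / mprod p n x))"
definition marg :: "nat \<Rightarrow> ((nat \<Rightarrow> real) \<Rightarrow> real) \<Rightarrow> (nat \<Rightarrow> real) \<Rightarrow> real" where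
  "marg n f x = f (x(n := 1)) + f (x(n := -1))"

lemma finite_Xs[simp]: "finite (Xs n)"
  unfolding Xs_def by (intro finite_PiE) auto

lemma Xs_0: "Xs 0 = {\<lambda>_. undefined}"
  unfolding Xs_def by simp

lemma Xs_Suc: "Xs (Suc n) = (\<lambda>(y, g). g(n := y)) ` ({-1, 1} \<times> Xs n)"
  unfolding Xs_def lessThan_Suc by (rule PiE_insert_eq)

lemma upd_in_Xs: "x \<in> Xs n \<Longrightarrow> b \<in> {-1, 1} \<Longrightarrow> x(n := b) \<in> Xs (Suc n)"
  unfolding Xs_Suc by auto

lemma sum_Xs_Suc:
  "(\<Sum>x\<in>Xs (Suc n). F x) = (\<Sum>x\<in>Xs n. F (x(n := 1)) + F (x(n := -1)))"
proof -
  have inj: "inj_on (\<lambda>(y, g). g(n := y)) ({-1, 1::real} \<times> Xs n)"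
    unfolding Xs_def by (rule inj_combinator) simp
  have "(\<Sum>x\<in>Xs (Suc n). F x) = (\<Sum>z\<in>{-1, 1::real} \<times> Xs n. F ((\<lambda>(y, g). g(n := y)) z))"
    unfolding Xs_Suc by (rule sum.reindex[OF inj, unfolded comp_def])
  also have "\<dots> = (\<Sum>y\<in>{-1, 1::real}. \<Sum>g\<in>Xs n. F (g(n := y)))"
    unfolding sum.cartesian_product by (intro sum.cong) auto
  also have "\<dots> = (\<Sum>x\<in>Xs n. F (x(n := 1)) + F (x(n := -1)))"
    by (simp add: sum.distrib ac_simps)
  finally show ?thesis .
qed

lemma Xs_restrict: "x \<in> Xs (Suc n) \<Longrightarrow> restrict x {..<n} \<in> Xs n \<and> x = (restrict x {..<n})(n := x n) \<and> x n \<in> {-1, 1}"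
  unfolding Xs_def by (auto simp: PiE_iff extensional_def fun_eq_iff)

lemma mprod_pos: "0 < p \<Longrightarrow> p < 1 \<Longrightarrow> 0 < mprod p n x"
  unfolding mprod_def by (intro prod_pos) auto

lemma mprod_upd:
  "mprod p (Suc n) (x(n := b)) = mprod p n x * (if b = 1 then p else 1 - p)"
proof -
  have "(\<Prod>i<n. if (x(n := b)) i = 1 then p else 1 - p) = (\<Prod>i<n. if x i = 1 then p else 1 - p)"
    by (intro prod.cong) auto
  then show ?thesis unfolding mprod_def by (simp add: prod.lessThan_Suc)
qed

lemma hh_split:
  assumes "c > 0" "s > 0" "m > 0" "A \<ge> 0"
  shows "A * ln (A / (m * c)) = s * hh c (A / s) + A * ln (s / m)"
proof (cases "A = 0")
  case True then show ?thesis by (simp add: hh_def)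
next
  case False
  then have "A > 0" using assms by auto
  then show ?thesis using assms
    by (simp add: hh_def ln_div ln_mult algebra_simps)
qed

lemma chain_pt:
  assumes "0 < p" "p < 1" "m > 0" "A \<ge> 0" "B \<ge> 0"
  shows "A * ln (A / (m * p)) + B * ln (B / (m * (1 - p)))
       = (A + B) * ln ((A + B) / m) + (A + B) * Ip p (2 * (A / (A + B)) - 1)"
proof (cases "A + B = 0")
  case True
  then have "A = 0" "B = 0" using assms by auto
  then show ?thesis by simp
next
  case False
  define s where "s = A + B"
  have s: "s > 0" using False assms by (auto simp: s_def)
  have q: "0 \<le> A / s" "A / s \<le> 1" using assms s by (auto simp: s_def)
  have e1: "(1 + (2 * (A / s) - 1)) / 2 = A / s" by simp
  have e2: "(1 - (2 * (A / s) - 1)) / 2 = B / s" using s by (simp add: s_def field_simps)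
  have "Ip p (2 * (A / s) - 1) = hh p (A / s) + hh (1 - p) (B / s)"
    using Ip_eq_hh[of p "2 * (A / s) - 1"] assms q s unfolding e1 e2 by simp
  moreover have "A * ln (A / (m * p)) = s * hh p (A / s) + A * ln (s / m)"
    by (rule hh_split) (use assms s in auto)
  moreover have "B * ln (B / (m * (1 - p))) = s * hh (1 - p) (B / s) + B * ln (s / m)"
    by (rule hh_split) (use assms s in auto)
  moreover have "A * ln (s / m) + B * ln (s / m) = s * ln (s / m)" by (simp add: s_def algebra_simps)
  ultimately show ?thesis unfolding s_def[symmetric] by (simp add: algebra_simps)
qed

lemma Hf_chain:
  assumes "0 < p" "p < 1" "\<And>x. x \<in> Xs (Suc n) \<Longrightarrow> 0 \<le> f x"
  shows "Hf p (Suc n) f = Hf p n (marg n f)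
     + (\<Sum>x\<in>Xs n. marg n f x * Ip p (2 * (f (x(n := 1)) / marg n f x) - 1))"
proof -
  have "Hf p (Suc n) f = (\<Sum>x\<in>Xs n. f (x(n := 1)) * ln (f (x(n := 1)) / (mprod p n x * p))
      + f (x(n := -1)) * ln (f (x(n := -1)) / (mprod p n x * (1 - p))))"
    unfolding Hf_def sum_Xs_Suc by (simp add: mprod_upd)
  also have "\<dots> = (\<Sum>x\<in>Xs n. marg n f x * ln (marg n f x / mprod p n x)
      + marg n f x * Ip p (2 * (f (x(n := 1)) / marg n f x) - 1))"
  proof (rule sum.cong[OF refl])
    fix x assume x: "x \<in> Xs n"
    show "f (x(n := 1)) * ln (f (x(n := 1)) / (mprod p n x * p))
      + f (x(n := -1)) * ln (f (x(n := -1)) / (mprod p n x * (1 - p)))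
      = marg n f x * ln (marg n f x / mprod p n x)
      + marg n f x * Ip p (2 * (f (x(n := 1)) / marg n f x) - 1)"
      unfolding marg_def
      by (rule chain_pt) (use assms mprod_pos upd_in_Xs[OF x] in auto)
  qed
  also have "\<dots> = Hf p n (marg n f)
     + (\<Sum>x\<in>Xs n. marg n f x * Ip p (2 * (f (x(n := 1)) / marg n f x) - 1))"
    unfolding Hf_def by (simp add: sum.distrib)
  finally show ?thesis .
qed

definition UU :: "nat \<Rightarrow> (nat \<Rightarrow> real) measure" where
  "UU n = PiM {..<n} (\<lambda>_. unifU)"
definition Wc :: "real \<Rightarrow> nat \<Rightarrow> (nat \<Rightarrow> real) \<Rightarrow> (nat \<Rightarrow> real) \<Rightarrow> ennreal" where
  "Wc p n x u = (\<Sum>i<n. cst p (x i) (u i))"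

lemma Xs_count: "count_space (Xs m) = PiM {..<m} (\<lambda>_. count_space {-1, 1::real})"
  unfolding Xs_def by (rule count_space_PiM_finite[symmetric]) auto

lemma space_UU: "space (UU n) = PiE {..<n} (\<lambda>_. UNIV)"
  unfolding UU_def by (simp add: space_PiM)

lemma prob_UU: "prob_space (UU n)"
  unfolding UU_def by (rule prob_space_PiM) (rule prob_unifU)

lemma psf_unif: "product_sigma_finite (\<lambda>_. unifU)"
  unfolding product_sigma_finite_def
  using prob_unifU by (auto intro: prob_space_imp_sigma_finite)

lemma comp_meas:
  assumes "F \<in> M \<rightarrow>\<^sub>M count_space (Xs m)" "i < m"
  shows "(\<lambda>z. F z i) \<in> borel_measurable M"
proof -
  have "(\<lambda>z. F z i) \<in> M \<rightarrow>\<^sub>M count_space {-1, 1::real}"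
    using measurable_compose[OF assms(1)[unfolded Xs_count] measurable_component_singleton[of i "{..<m}"]]
      assms(2) by simp
  then show ?thesis
    using measurable_compose[of _ M "count_space {-1, 1::real}" "\<lambda>x. x" borel]
    by (simp add: borel_measurable_count_space)
qed

lemma ucomp_meas:
  assumes "V \<in> M \<rightarrow>\<^sub>M UU m" "i < m"
  shows "(\<lambda>z. V z i) \<in> borel_measurable M"
proof -
  have "(\<lambda>z. V z i) \<in> M \<rightarrow>\<^sub>M unifU"
    using measurable_compose[OF assms(1)[unfolded UU_def] measurable_component_singleton[of i "{..<m}"]]
      assms(2) by simp
  then show ?thesis using measurable_cong_sets[OF refl sets_unifU] by blast
qed

lemma Wc_meas:
  assumes "F \<in> M \<rightarrow>\<^sub>M count_space (Xs m)" "V \<in> M \<rightarrow>\<^sub>M UU m"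
  shows "(\<lambda>z. Wc p m (F z) (V z)) \<in> borel_measurable M"
  unfolding Wc_def
proof (rule borel_measurable_sum)
  fix i assume "i \<in> {..<m}"
  then have "(\<lambda>z. (F z i, V z i)) \<in> M \<rightarrow>\<^sub>M borel \<Otimes>\<^sub>M borel"
    using comp_meas[OF assms(1)] ucomp_meas[OF assms(2)] by (intro measurable_Pair) auto
  from measurable_compose[OF this cst_meas[of p]]
  show "(\<lambda>z. cst p (F z i) (V z i)) \<in> borel_measurable M" by simp
qed

lemma nn_integral_finite_range:
  assumes T: "T \<in> M \<rightarrow>\<^sub>M count_space A" and fin: "finite A"
  shows "(\<integral>\<^sup>+v. g (T v) \<partial>M) = (\<Sum>a\<in>A. g a * emeasure M {v\<in>space M. T v = a})"
proof -
  have sets: "{v\<in>space M. T v = a} \<in> sets M" for a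
  proof -
    have "{v\<in>space M. T v = a} = T -` ({a} \<inter> A) \<inter> space M"
      using measurable_space[OF T] by auto
    then show ?thesis using measurable_sets[OF T, of "{a} \<inter> A"] by simp
  qed
  have "(\<integral>\<^sup>+v. g (T v) \<partial>M) = (\<integral>\<^sup>+v. (\<Sum>a\<in>A. g a * indicator {v\<in>space M. T v = a} v) \<partial>M)"
  proof (rule nn_integral_cong)
    fix v assume v: "v \<in> space M"
    then have "T v \<in> A" using measurable_space[OF T] by auto
    have "(\<Sum>a\<in>A. g a * indicator {v\<in>space M. T v = a} v) = (\<Sum>a\<in>A. if a = T v then g a else 0)"
      using v by (intro sum.cong) (auto simp: indicator_def)
    also have "\<dots> = g (T v)" using \<open>T v \<in> A\<close> fin by (simp add: sum.delta')
    finally show "g (T v) = (\<Sum>a\<in>A. g a * indicator {v\<in>space M. T v = a} v)" by simp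
  qed
  also have "\<dots> = (\<Sum>a\<in>A. \<integral>\<^sup>+v. g a * indicator {v\<in>space M. T v = a} v \<partial>M)"
    by (rule nn_integral_sum) (use sets in auto)
  also have "\<dots> = (\<Sum>a\<in>A. g a * emeasure M {v\<in>space M. T v = a})"
    by (intro sum.cong refl nn_integral_cmult_indicator sets)
  finally show ?thesis .
qed

lemma upd_eq_Xs:
  assumes "g \<in> Xs n" "g' \<in> Xs n"
  shows "(g(n := c) = g'(n := c')) \<longleftrightarrow> g = g' \<and> c = c'"
proof
  assume e: "g(n := c) = g'(n := c')"
  have "c = c'" using fun_cong[OF e, of n] by simp
  moreover have "g = g'"
  proof
    fix i show "g i = g' i"
    proof (cases "i = n")
      case True
      have "g n = undefined" "g' n = undefined"
        using assms PiE_arb[of g "{..<n}" "\<lambda>_. {-1, 1}" n] PiE_arb[of g' "{..<n}" "\<lambda>_. {-1, 1}" n]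
        unfolding Xs_def by auto
      then show ?thesis using True by simp
    next
      case False
      then show ?thesis using fun_cong[OF e, of i] by simp
    qed
  qed
  ultimately show "g = g' \<and> c = c'" by simp
qed simp

lemma unifU_le:
  assumes "0 \<le> q" "q \<le> 1"
  shows "emeasure unifU {y. y \<le> 2*q-1} = ennreal q"
    and "emeasure unifU {y. \<not> y \<le> 2*q-1} = ennreal (1 - q)"
proof -
  have "{-1..1} \<inter> {y. y \<le> 2*q-1} = {-1..2*q-1::real}" using assms by auto
  then have "emeasure unifU {y. y \<le> 2*q-1} = ennreal (2*q) / 2"
    using assms by (simp add: emeasure_unifU)
  then show "emeasure unifU {y. y \<le> 2*q-1} = ennreal q"
    using ennreal_half2(2)[of q] assms by simp
  have "{-1..1} \<inter> {y. \<not> y \<le> 2*q-1} = {2*q-1<..1::real}" using assms by auto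
  then have "emeasure unifU {y. \<not> y \<le> 2*q-1} = ennreal (2 * (1 - q)) / 2"
    using assms by (simp add: emeasure_unifU algebra_simps)
  then show "emeasure unifU {y. \<not> y \<le> 2*q-1} = ennreal (1 - q)"
    using ennreal_half2(2)[of "1-q"] assms by simp
qed

lemma cst_meas2:
  assumes "g \<in> borel_measurable M" "h \<in> borel_measurable M"
  shows "(\<lambda>z. cst p (g z) (h z)) \<in> borel_measurable M"
proof -
  have "(\<lambda>z. (g z, h z)) \<in> M \<rightarrow>\<^sub>M borel \<Otimes>\<^sub>M borel" using assms by (intro measurable_Pair)
  from measurable_compose[OF this cst_meas[of p]] show ?thesis by simp
qed

lemma R_upd:
  assumes "v \<in> space (UU n)"
  shows "restrict (v(n := y)) {..<n} = v"
proof
  fix i show "restrict (v(n := y)) {..<n} i = v i"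
  proof (cases "i < n")
    case False
    have vP: "v \<in> PiE {..<n} (\<lambda>_. UNIV)" using assms unfolding space_UU .
    have "v i = undefined" using PiE_arb[OF vP, of i] False by simp
    then show ?thesis using False by simp
  qed simp
qed

lemma upd_space_UU: "v \<in> space (UU n) \<Longrightarrow> v(n := y) \<in> space (UU (Suc n))"
  by (auto simp: space_UU PiE_iff extensional_def)

lemma UU_Suc: "UU (Suc n) = PiM (insert n {..<n}) (\<lambda>_. unifU)"
  unfolding UU_def lessThan_Suc ..

lemma UU_insert_integral:
  assumes "f \<in> borel_measurable (UU (Suc n))"
  shows "(\<integral>\<^sup>+u. f u \<partial>UU (Suc n)) = (\<integral>\<^sup>+v. (\<integral>\<^sup>+y. f (v(n := y)) \<partial>unifU) \<partial>UU n)"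
  using product_sigma_finite.product_nn_integral_insert[OF psf_unif, of "{..<n}" n f] assms
  unfolding UU_Suc by (simp add: UU_def)

lemma upper_T:
  assumes p: "0 < p" "p < 1"
  shows "(\<And>x. x \<in> Xs n \<Longrightarrow> 0 \<le> f x) \<Longrightarrow> (\<Sum>x\<in>Xs n. f x) = 1 \<Longrightarrow>
    \<exists>T. T \<in> UU n \<rightarrow>\<^sub>M count_space (Xs n)
      \<and> (\<forall>x\<in>Xs n. emeasure (UU n) {u\<in>space (UU n). T u = x} = ennreal (f x))
      \<and> (\<integral>\<^sup>+u. Wc p n (T u) u \<partial>UU n) \<le> ennreal (Hf p n f) \<and> 0 \<le> Hf p n f"
proof (induction n arbitrary: f)
  case 0
  define T0 where "T0 = (\<lambda>u::nat\<Rightarrow>real. (\<lambda>_. undefined) :: nat \<Rightarrow> real)"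
  have sp: "space (UU 0) = {\<lambda>_. undefined}" by (simp add: space_UU)
  have f1: "f (\<lambda>_. undefined) = 1" using 0 by (simp add: Xs_0)
  have H0: "Hf p 0 f = 0" unfolding Hf_def Xs_0 mprod_def using f1 by simp
  show ?case
  proof (intro exI conjI ballI)
    show "T0 \<in> UU 0 \<rightarrow>\<^sub>M count_space (Xs 0)" unfolding T0_def Xs_0 by (rule measurable_const) simp
  next
    fix x assume "x \<in> Xs 0"
    then have x: "x = (\<lambda>_. undefined)" by (simp add: Xs_0)
    have "{u\<in>space (UU 0). T0 u = x} = space (UU 0)" using x by (auto simp: T0_def)
    then show "emeasure (UU 0) {u\<in>space (UU 0). T0 u = x} = ennreal (f x)"
      using prob_space.emeasure_space_1[OF prob_UU[of 0]] x f1 by simp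
  next
    show "(\<integral>\<^sup>+u. Wc p 0 (T0 u) u \<partial>UU 0) \<le> ennreal (Hf p 0 f)" by (simp add: Wc_def)
  next
    show "0 \<le> Hf p 0 f" using H0 by simp
  qed
next
  case (Suc n)
  define f' where "f' = marg n f"
  have fnn: "\<And>x. x \<in> Xs (Suc n) \<Longrightarrow> 0 \<le> f x" by (rule Suc.prems(1))
  have f'nn: "0 \<le> f' x" if "x \<in> Xs n" for x
    unfolding f'_def marg_def using fnn[OF upd_in_Xs[OF that]] by simp
  have f'sum: "(\<Sum>x\<in>Xs n. f' x) = 1"
    using Suc.prems(2) unfolding sum_Xs_Suc f'_def marg_def by simp
  obtain T where Tm: "T \<in> UU n \<rightarrow>\<^sub>M count_space (Xs n)"
    and Tf: "\<forall>x\<in>Xs n. emeasure (UU n) {u\<in>space (UU n). T u = x} = ennreal (f' x)"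
    and Tc: "(\<integral>\<^sup>+u. Wc p n (T u) u \<partial>UU n) \<le> ennreal (Hf p n f')"
    and Hn: "0 \<le> Hf p n f'"
    using Suc.IH[of f', OF f'nn f'sum] by blast
  have Tsp: "T v \<in> Xs n" if "v \<in> space (UU n)" for v
    using measurable_space[OF Tm that] by simp
  define qq where "qq x = f (x(n := 1)) / f' x" for x
  have qq01: "0 \<le> qq x \<and> qq x \<le> 1" if "x \<in> Xs n" for x
  proof -
    have "0 \<le> f (x(n := 1))" "0 \<le> f (x(n := -1))"
      using fnn upd_in_Xs[OF that] by auto
    then show ?thesis unfolding qq_def f'_def marg_def
      by (cases "f (x(n := 1)) + f (x(n := -1)) = 0") (auto simp: divide_le_eq_1)
  qed
  define R where "R u = restrict u {..<n}" for u :: "nat \<Rightarrow> real"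
  define S where "S u = (if u n \<le> 2 * qq (T (R u)) - 1 then 1 else -1::real)" for u
  define T' where "T' u = (T (R u))(n := S u)" for u
  have Rm: "R \<in> UU (Suc n) \<rightarrow>\<^sub>M UU n"
    unfolding R_def UU_def by (rule measurable_restrict_subset) auto
  have TRm: "(\<lambda>u. T (R u)) \<in> UU (Suc n) \<rightarrow>\<^sub>M count_space (Xs n)"
    using measurable_compose[OF Rm Tm] by simp
  have g1: "(\<lambda>u. u n) \<in> borel_measurable (UU (Suc n))"
    by (rule ucomp_meas[of "\<lambda>x. x"]) auto
  have g2: "(\<lambda>u. 2 * qq (T (R u)) - 1) \<in> borel_measurable (UU (Suc n))"
    using measurable_compose[OF TRm borel_measurable_count_space[of "\<lambda>x. 2 * qq x - 1"]] by simp
  have Sset: "{u \<in> space (UU (Suc n)). u n \<le> 2 * qq (T (R u)) - 1} \<in> sets (UU (Suc n))"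
    using borel_measurable_le[OF g1 g2] .
  have Sm: "S \<in> UU (Suc n) \<rightarrow>\<^sub>M count_space {-1, 1::real}"
    unfolding S_def by (rule measurable_If[OF _ _ Sset]) auto
  have T'eq: "T' = (\<lambda>u i. if i = n then S u else T (R u) i)"
    unfolding T'_def by (auto simp: fun_eq_iff)
  have T'm: "T' \<in> UU (Suc n) \<rightarrow>\<^sub>M count_space (Xs (Suc n))"
    unfolding T'eq Xs_count
  proof (rule measurable_PiM_single')
    fix i assume i: "i \<in> {..<Suc n}"
    show "(\<lambda>u. if i = n then S u else T (R u) i) \<in> UU (Suc n) \<rightarrow>\<^sub>M count_space {-1, 1}"
    proof (cases "i = n")
      case True then show ?thesis using Sm by simp
    next
      case False
      then have "i \<in> {..<n}" using i by auto
      then show ?thesis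
        using False measurable_compose[OF TRm[unfolded Xs_count] measurable_component_singleton[of i "{..<n}"]]
        by simp
    qed
  next
    show "(\<lambda>u i. if i = n then S u else T (R u) i) \<in> space (UU (Suc n)) \<rightarrow> (\<Pi>\<^sub>E i\<in>{..<Suc n}. space (count_space {-1, 1::real}))"
    proof
      fix u assume u: "u \<in> space (UU (Suc n))"
      have TR: "T (R u) \<in> Xs n" using measurable_space[OF TRm u] by simp
      have "S u \<in> {-1, 1}" unfolding S_def by simp
      then show "(\<lambda>i. if i = n then S u else T (R u) i) \<in> (\<Pi>\<^sub>E i\<in>{..<Suc n}. space (count_space {-1, 1::real}))"
        using TR unfolding Xs_def by (auto simp: PiE_iff extensional_def)
    qed
  qed
  have T'upd: "T' (v(n := y)) = (T v)(n := (if y \<le> 2 * qq (T v) - 1 then 1 else -1))"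
    if "v \<in> space (UU n)" for v y
    unfolding T'_def S_def R_def R_upd[OF that] by simp
  have dist: "emeasure (UU (Suc n)) {u\<in>space (UU (Suc n)). T' u = x} = ennreal (f x)"
    if x: "x \<in> Xs (Suc n)" for x
  proof -
    define x' where "x' = restrict x {..<n}"
    define b where "b = x n"
    have x'X: "x' \<in> Xs n" and xeq: "x = x'(n := b)" and b: "b \<in> {-1, 1}"
      using Xs_restrict[OF x] unfolding x'_def b_def by auto
    define A where "A = {u\<in>space (UU (Suc n)). T' u = x}"
    have Aset: "A \<in> sets (UU (Suc n))"
    proof -
      have "A = T' -` {x} \<inter> space (UU (Suc n))" unfolding A_def by auto
      then show ?thesis using measurable_sets[OF T'm, of "{x}"] x by simp
    qed
    define Sb where "Sb = {y::real. (if y \<le> 2 * qq x' - 1 then 1 else -1) = b}"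
    have Sbset: "Sb \<in> sets borel" unfolding Sb_def by measurable
    define cb where "cb = (if b = 1 then qq x' else 1 - qq x')"
    have Sbm: "emeasure unifU Sb = ennreal cb"
    proof (cases "b = 1")
      case True
      then have "Sb = {y. y \<le> 2 * qq x' - 1}" unfolding Sb_def by auto
      then show ?thesis using unifU_le(1)[of "qq x'"] qq01[OF x'X] True by (simp add: cb_def)
    next
      case False
      then have "b = -1" using b by auto
      then have "Sb = {y. \<not> y \<le> 2 * qq x' - 1}" unfolding Sb_def by auto
      then show ?thesis using unifU_le(2)[of "qq x'"] qq01[OF x'X] False by (simp add: cb_def)
    qed
    have "emeasure (UU (Suc n)) A = (\<integral>\<^sup>+u. indicator A u \<partial>UU (Suc n))"
      using Aset by simp
    also have "\<dots> = (\<integral>\<^sup>+v. (\<integral>\<^sup>+y. indicator A (v(n := y)) \<partial>unifU) \<partial>UU n)"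
      by (rule UU_insert_integral) (use Aset in simp)
    also have "\<dots> = (\<integral>\<^sup>+v. (\<integral>\<^sup>+y. indicator {v\<in>space (UU n). T v = x'} v * indicator Sb y \<partial>unifU) \<partial>UU n)"
    proof (rule nn_integral_cong)
      fix v assume v: "v \<in> space (UU n)"
      show "(\<integral>\<^sup>+y. indicator A (v(n := y)) \<partial>unifU)
          = (\<integral>\<^sup>+y. indicator {v\<in>space (UU n). T v = x'} v * indicator Sb y \<partial>unifU)"
      proof (rule nn_integral_cong)
        fix y
        have "v(n := y) \<in> A \<longleftrightarrow> T v = x' \<and> (if y \<le> 2 * qq (T v) - 1 then 1 else -1) = b"
          unfolding A_def using upd_space_UU[OF v] T'upd[OF v] xeq upd_eq_Xs[OF Tsp[OF v] x'X] by simp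
        then show "indicator A (v(n := y)) = (indicator {v\<in>space (UU n). T v = x'} v * indicator Sb y :: ennreal)"
          using v unfolding Sb_def by (auto simp: indicator_def)
      qed
    qed
    also have "\<dots> = (\<integral>\<^sup>+v. ennreal cb * indicator {v\<in>space (UU n). T v = x'} v \<partial>UU n)"
    proof (rule nn_integral_cong)
      fix v
      show "(\<integral>\<^sup>+y. indicator {v\<in>space (UU n). T v = x'} v * indicator Sb y \<partial>unifU)
          = ennreal cb * indicator {v\<in>space (UU n). T v = x'} v"
        using nn_integral_cmult_indicator[OF Sbset[folded sets_unifU], of "indicator {v\<in>space (UU n). T v = x'} v"]
        by (simp add: Sbm mult.commute)
    qed
    also have "\<dots> = ennreal cb * emeasure (UU n) {v\<in>space (UU n). T v = x'}"
    proof (rule nn_integral_cmult_indicator)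
      have "{v\<in>space (UU n). T v = x'} = T -` {x'} \<inter> space (UU n)" by auto
      then show "{v\<in>space (UU n). T v = x'} \<in> sets (UU n)"
        using measurable_sets[OF Tm, of "{x'}"] x'X by simp
    qed
    also have "\<dots> = ennreal cb * ennreal (f' x')" using Tf x'X by simp
    also have "\<dots> = ennreal (cb * f' x')"
      using qq01[OF x'X] f'nn[OF x'X] by (simp add: cb_def ennreal_mult)
    also have "cb * f' x' = f x"
    proof -
      have nn1: "0 \<le> f (x'(n := 1))" and nn0: "0 \<le> f (x'(n := -1))"
        using fnn upd_in_Xs[OF x'X] by auto
      show ?thesis
      proof (cases "f' x' = 0")
        case True
        then have "f (x'(n := 1)) = 0" "f (x'(n := -1)) = 0"
          using nn1 nn0 unfolding f'_def marg_def by auto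
        then show ?thesis using True b xeq by auto
      next
        case False
        have e1: "qq x' * f' x' = f (x'(n := 1))" using False by (simp add: qq_def)
        have e2: "(1 - qq x') * f' x' = f (x'(n := -1))"
          using e1 by (simp add: left_diff_distrib f'_def marg_def)
        show ?thesis
        proof (cases "b = 1")
          case True then show ?thesis using e1 xeq by (simp add: cb_def)
        next
          case False
          then have "b = -1" using b by auto
          then show ?thesis using e2 xeq by (simp add: cb_def)
        qed
      qed
    qed
    finally show ?thesis unfolding A_def .
  qed
  define E where "E x = Ip p (2 * qq x - 1)" for x
  have Enn: "0 \<le> E x" if "x \<in> Xs n" for x
    unfolding E_def using qq01[OF that] Ip_nonneg[OF p, of "2 * qq x - 1"] by auto
  have Wsplit: "Wc p (Suc n) (T' (v(n := y))) (v(n := y))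
      = Wc p n (T v) v + cst p (if y \<le> 2 * qq (T v) - 1 then 1 else -1) y"
    if v: "v \<in> space (UU n)" for v y
  proof -
    have "(\<Sum>i<n. cst p (T' (v(n := y)) i) ((v(n := y)) i)) = (\<Sum>i<n. cst p (T v i) (v i))"
      by (intro sum.cong refl) (simp add: T'upd[OF v])
    then show ?thesis unfolding Wc_def by (simp add: T'upd[OF v])
  qed
  have "(\<integral>\<^sup>+u. Wc p (Suc n) (T' u) u \<partial>UU (Suc n))
      = (\<integral>\<^sup>+v. (\<integral>\<^sup>+y. Wc p (Suc n) (T' (v(n := y))) (v(n := y)) \<partial>unifU) \<partial>UU n)"
    by (rule UU_insert_integral) (rule Wc_meas[OF T'm, of "\<lambda>x. x", simplified])
  also have "\<dots> = (\<integral>\<^sup>+v. Wc p n (T v) v + ennreal (E (T v)) \<partial>UU n)"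
  proof (rule nn_integral_cong)
    fix v assume v: "v \<in> space (UU n)"
    have "(\<integral>\<^sup>+y. Wc p (Suc n) (T' (v(n := y))) (v(n := y)) \<partial>unifU)
        = (\<integral>\<^sup>+y. Wc p n (T v) v + cst p (if y \<le> 2 * qq (T v) - 1 then 1 else -1) y \<partial>unifU)"
      by (rule nn_integral_cong) (simp add: Wsplit[OF v])
    also have "\<dots> = (\<integral>\<^sup>+y. Wc p n (T v) v \<partial>unifU)
        + (\<integral>\<^sup>+y. cst p (if y \<le> 2 * qq (T v) - 1 then 1 else -1) y \<partial>unifU)"
      by (rule nn_integral_add) (auto intro!: cst_meas2)
    also have "(\<integral>\<^sup>+y. Wc p n (T v) v \<partial>unifU) = Wc p n (T v) v"
      using prob_space.emeasure_space_1[OF prob_unifU] by (simp add: nn_integral_const)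
    also have "(\<integral>\<^sup>+y. cst p (if y \<le> 2 * qq (T v) - 1 then 1 else -1) y \<partial>unifU) = ennreal (E (T v))"
      unfolding E_def using cost1_upper[OF p, of "qq (T v)"] qq01[OF Tsp[OF v]] by simp
    finally show "(\<integral>\<^sup>+y. Wc p (Suc n) (T' (v(n := y))) (v(n := y)) \<partial>unifU)
        = Wc p n (T v) v + ennreal (E (T v))" .
  qed
  also have "\<dots> = (\<integral>\<^sup>+v. Wc p n (T v) v \<partial>UU n) + (\<integral>\<^sup>+v. ennreal (E (T v)) \<partial>UU n)"
  proof (rule nn_integral_add)
    show "(\<lambda>v. Wc p n (T v) v) \<in> borel_measurable (UU n)"
      by (rule Wc_meas[OF Tm, of "\<lambda>x. x", simplified])
    show "(\<lambda>v. ennreal (E (T v))) \<in> borel_measurable (UU n)"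
      using measurable_compose[OF Tm borel_measurable_count_space[of "\<lambda>x. ennreal (E x)"]] by simp
  qed
  also have "(\<integral>\<^sup>+v. ennreal (E (T v)) \<partial>UU n) = (\<Sum>a\<in>Xs n. ennreal (E a) * emeasure (UU n) {v\<in>space (UU n). T v = a})"
    by (rule nn_integral_finite_range[OF Tm]) simp
  also have "\<dots> = (\<Sum>a\<in>Xs n. ennreal (f' a * E a))"
    by (intro sum.cong refl) (simp add: Tf f'nn Enn ennreal_mult mult.commute)
  also have "\<dots> = ennreal (\<Sum>a\<in>Xs n. f' a * E a)"
    by (rule sum_ennreal) (simp add: f'nn Enn)
  finally have cost: "(\<integral>\<^sup>+u. Wc p (Suc n) (T' u) u \<partial>UU (Suc n))
      \<le> ennreal (Hf p n f') + ennreal (\<Sum>a\<in>Xs n. f' a * E a)"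
    using Tc by (simp add: add_right_mono)
  have chain: "Hf p (Suc n) f = Hf p n f' + (\<Sum>a\<in>Xs n. f' a * E a)"
    unfolding f'_def E_def qq_def using Hf_chain[OF p fnn] by (simp add: f'_def)
  have snn: "0 \<le> (\<Sum>a\<in>Xs n. f' a * E a)"
    by (intro sum_nonneg) (simp add: f'nn Enn)
  show ?case
  proof (intro exI conjI ballI)
    show "T' \<in> UU (Suc n) \<rightarrow>\<^sub>M count_space (Xs (Suc n))" by (rule T'm)
    fix x assume "x \<in> Xs (Suc n)"
    then show "emeasure (UU (Suc n)) {u\<in>space (UU (Suc n)). T' u = x} = ennreal (f x)" by (rule dist)
  next
    show "(\<integral>\<^sup>+u. Wc p (Suc n) (T' u) u \<partial>UU (Suc n)) \<le> ennreal (Hf p (Suc n) f)"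
      using cost chain Hn snn by (simp add: ennreal_plus)
  next
    show "0 \<le> Hf p (Suc n) f" using chain Hn snn by simp
  qed
qed

lemma Xs_ext: "x \<in> Xs n \<Longrightarrow> x \<in> extensional {..<n}"
  unfolding Xs_def by (simp add: PiE_iff)

lemma Xs_singleton: "x \<in> Xs n \<Longrightarrow> PiE {..<n} (\<lambda>i. {x i}) = {x}"
  by (rule PiE_singleton[OF Xs_ext])

lemma Xs_comp: "x \<in> Xs n \<Longrightarrow> i < n \<Longrightarrow> x i \<in> {-1, 1}"
  unfolding Xs_def by (auto simp: PiE_iff)

lemma sets_Xs_PiM:
  assumes "\<And>i. i < n \<Longrightarrow> sets (M i) = sets (count_space {-1, 1::real})"
  shows "sets (PiM {..<n} M) = Pow (Xs n)"
proof -
  have "sets (PiM {..<n} M) = sets (PiM {..<n} (\<lambda>_. count_space {-1, 1::real}))"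
    by (rule sets_PiM_cong) (use assms in auto)
  also have "\<dots> = Pow (Xs n)" unfolding Xs_count[symmetric] by simp
  finally show ?thesis .
qed

lemma fin_meas_density:
  assumes "sets M = Pow A" "finite A" "finite_measure M"
  shows "M = density (count_space A) (\<lambda>a. ennreal (measure M {a}))"
proof (rule measure_eqI_finite[OF assms(1) _ assms(2)])
  show "sets (density (count_space A) (\<lambda>a. ennreal (measure M {a}))) = Pow A" by simp
  fix a assume a: "a \<in> A"
  have "emeasure (density (count_space A) (\<lambda>a. ennreal (measure M {a}))) {a}
      = (\<integral>\<^sup>+x. ennreal (measure M {x}) * indicator {a} x \<partial>count_space A)"
    using a by (subst emeasure_density) auto
  also have "\<dots> = (\<Sum>x\<in>A. ennreal (measure M {x}) * indicator {a} x)"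
    using assms(2) by (rule nn_integral_count_space_finite)
  also have "\<dots> = ennreal (measure M {a})"
    using a assms(2) by (simp add: indicator_def sum.delta' cong: if_cong)
  also have "\<dots> = emeasure M {a}"
    using finite_measure.emeasure_eq_measure[OF assms(3)] by simp
  finally show "emeasure M {a} = emeasure (density (count_space A) (\<lambda>a. ennreal (measure M {a}))) {a}" by simp
qed

lemma fin_integral:
  fixes h :: "'a \<Rightarrow> real"
  assumes "sets M = Pow A" "finite A" "finite_measure M"
  shows "integrable M h" "integral\<^sup>L M h = (\<Sum>a\<in>A. measure M {a} * h a)"
proof -
  note eq = fin_meas_density[OF assms]
  have "integrable (density (count_space A) (\<lambda>a. ennreal (measure M {a}))) h"
    by (subst integrable_density) (auto intro: integrable_count_space assms(2))
  then show "integrable M h" using eq by simp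
  have "integral\<^sup>L (density (count_space A) (\<lambda>a. ennreal (measure M {a}))) h
      = (\<integral>x. measure M {x} *\<^sub>R h x \<partial>count_space A)"
    by (subst integral_density) auto
  also have "\<dots> = (\<Sum>a\<in>A. measure M {a} * h a)"
    using assms(2) by (simp add: lebesgue_integral_count_space_finite)
  finally show "integral\<^sup>L M h = (\<Sum>a\<in>A. measure M {a} * h a)" using eq by simp
qed

lemma mu_p_sets[simp]: "sets (mu_p p) = sets (count_space {-1, 1})"
  by (simp add: mu_p_def)

lemma mu_p_single:
  assumes "b \<in> {-1, 1}"
  shows "emeasure (mu_p p) {b} = ennreal (if b = 1 then p else 1 - p)"
proof -
  have "emeasure (mu_p p) {b} = (\<integral>\<^sup>+x. (if x = 1 then ennreal p else ennreal (1 - p)) * indicator {b} x \<partial>count_space {-1, 1})"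
    unfolding mu_p_def using assms by (subst emeasure_density) auto
  also have "\<dots> = (\<Sum>x\<in>{-1, 1::real}. (if x = 1 then ennreal p else ennreal (1 - p)) * indicator {b} x)"
    by (rule nn_integral_count_space_finite) simp
  also have "\<dots> = ennreal (if b = 1 then p else 1 - p)"
    using assms by (auto simp: indicator_def)
  finally show ?thesis .
qed

lemma mu_p_prob:
  assumes "0 < p" "p < 1"
  shows "prob_space (mu_p p)"
proof (rule prob_spaceI)
  have sp: "space (mu_p p) = {-1, 1}" by (simp add: mu_p_def)
  have u: "{-1, 1} = {-1} \<union> {1::real}" by auto
  have "emeasure (mu_p p) {-1, 1} = emeasure (mu_p p) {-1} + emeasure (mu_p p) {1}"
    unfolding u by (rule plus_emeasure[symmetric]) auto
  also have "\<dots> = ennreal (1 - p) + ennreal p" by (simp add: mu_p_single)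
  also have "\<dots> = 1" using assms by (simp add: ennreal_plus[symmetric])
  finally show "emeasure (mu_p p) (space (mu_p p)) = 1" using sp by simp
qed

lemma MU_single:
  assumes "0 < p" "p < 1" "x \<in> Xs n"
  shows "emeasure (PiM {..<n} (\<lambda>_. mu_p p)) {x} = ennreal (mprod p n x)"
proof -
  interpret product_sigma_finite "\<lambda>_. mu_p p"
    unfolding product_sigma_finite_def using mu_p_prob[OF assms(1,2)]
    by (auto intro: prob_space_imp_sigma_finite)
  have "emeasure (PiM {..<n} (\<lambda>_. mu_p p)) (PiE {..<n} (\<lambda>i. {x i})) = (\<Prod>i<n. emeasure (mu_p p) {x i})"
    by (rule emeasure_PiM) (use Xs_comp[OF assms(3)] in auto)
  also have "\<dots> = (\<Prod>i<n. ennreal (if x i = 1 then p else 1 - p))"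
    by (intro prod.cong refl mu_p_single) (use Xs_comp[OF assms(3)] in auto)
  also have "\<dots> = ennreal (mprod p n x)"
    unfolding mprod_def using assms by (intro prod_ennreal) auto
  finally show ?thesis using Xs_singleton[OF assms(3)] by simp
qed

lemma rel_entropy_eq:
  assumes p: "0 < p" "p < 1" and nu: "prob_space \<nu>" "sets \<nu> = Pow (Xs n)"
  shows "rel_entropy \<nu> (PiM {..<n} (\<lambda>_. mu_p p)) = ereal (Hf p n (\<lambda>x. measure \<nu> {x}))"
proof -
  define MU where "MU = PiM {..<n} (\<lambda>_. mu_p p)"
  define f where "f x = measure \<nu> {x}" for x
  define g where "g x = ennreal (f x / mprod p n x)" for x
  have setsMU: "sets MU = Pow (Xs n)" unfolding MU_def by (rule sets_Xs_PiM) simp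
  have setsMU': "sets MU = sets (count_space (Xs n))" using setsMU by simp
  have spMU: "space MU = Xs n" using sets_eq_imp_space_eq[OF setsMU'] by simp
  have fnn: "0 \<le> f x" for x unfolding f_def by simp
  have mpos: "0 < mprod p n x" for x using mprod_pos[OF p] .
  have finnu: "finite_measure \<nu>" using nu(1) by (simp add: prob_space_def)
  have gm: "g \<in> borel_measurable MU"
    using measurable_cong_sets[OF setsMU' refl, of borel] borel_measurable_count_space by blast
  have sfMU: "sigma_finite_measure MU"
    unfolding MU_def by (intro prob_space_imp_sigma_finite prob_space_PiM mu_p_prob p)
  have nud: "density MU g = \<nu>"
  proof (rule measure_eqI_finite[of _ "Xs n"])
    show "sets (density MU g) = Pow (Xs n)" using setsMU by simp
    show "sets \<nu> = Pow (Xs n)" by (rule nu(2))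
    show "finite (Xs n)" by simp
    fix a assume a: "a \<in> Xs n"
    have "emeasure (density MU g) {a} = (\<integral>\<^sup>+x. g x * indicator {a} x \<partial>MU)"
      using a setsMU by (subst emeasure_density[OF gm]) auto
    also have "\<dots> = (\<integral>\<^sup>+x. g a * indicator {a} x \<partial>MU)"
      by (rule nn_integral_cong) (simp add: indicator_def)
    also have "\<dots> = g a * emeasure MU {a}"
      using a setsMU by (subst nn_integral_cmult_indicator) auto
    also have "\<dots> = ennreal (f a / mprod p n a) * ennreal (mprod p n a)"
      unfolding g_def MU_def using MU_single[OF p a] by simp
    also have "\<dots> = ennreal (f a)"
      using mpos[of a] fnn[of a] by (simp add: ennreal_mult[symmetric])
    also have "\<dots> = emeasure \<nu> {a}"
      unfolding f_def using finite_measure.emeasure_eq_measure[OF finnu] by simp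
    finally show "emeasure (density MU g) {a} = emeasure \<nu> {a}" .
  qed
  have ae: "AE x in MU. g x = RN_deriv MU \<nu> x"
    using sigma_finite_measure.RN_deriv_unique[OF sfMU gm nud] .
  have RN: "RN_deriv MU \<nu> x = g x" if x: "x \<in> Xs n" for x
  proof (rule ccontr)
    assume ne: "RN_deriv MU \<nu> x \<noteq> g x"
    from ae obtain N where N: "{x\<in>space MU. \<not> g x = RN_deriv MU \<nu> x} \<subseteq> N" "emeasure MU N = 0" "N \<in> sets MU"
      by (rule AE_E)
    have "{x} \<subseteq> N" using N(1) ne x spMU by auto
    then have "emeasure MU {x} \<le> emeasure MU N" using N(3) by (intro emeasure_mono) auto
    then have "emeasure MU {x} = 0" using N(2) by simp
    moreover have "emeasure MU {x} = ennreal (mprod p n x)" unfolding MU_def using MU_single[OF p x] .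
    ultimately show False using mpos[of x] by simp
  qed
  have ac: "absolutely_continuous MU \<nu>"
    using absolutely_continuousI_density[OF gm] nud by simp
  have sets_eq: "sets \<nu> = sets MU" using nu(2) setsMU by simp
  have int: "integrable \<nu> (\<lambda>x. ln (enn2real (RN_deriv MU \<nu> x)))"
    by (rule fin_integral(1)[OF nu(2) _ finnu]) simp
  have "integral\<^sup>L \<nu> (\<lambda>x. ln (enn2real (RN_deriv MU \<nu> x)))
      = (\<Sum>a\<in>Xs n. measure \<nu> {a} * ln (enn2real (RN_deriv MU \<nu> a)))"
    by (rule fin_integral(2)[OF nu(2) _ finnu]) simp
  also have "\<dots> = Hf p n f"
    unfolding Hf_def
  proof (rule sum.cong[OF refl])
    fix a assume a: "a \<in> Xs n"
    have "enn2real (RN_deriv MU \<nu> a) = f a / mprod p n a"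
      using RN[OF a] fnn[of a] mpos[of a] by (simp add: g_def)
    then show "measure \<nu> {a} * ln (enn2real (RN_deriv MU \<nu> a)) = f a * ln (f a / mprod p n a)"
      by (simp add: f_def)
  qed
  finally show ?thesis
    unfolding rel_entropy_def MU_def[symmetric] f_def[symmetric] using sets_eq ac int by simp
qed

lemma wp_meas:
  assumes "0 < p" "p < 1" "F \<in> M \<rightarrow>\<^sub>M count_space (Xs n)" "V \<in> M \<rightarrow>\<^sub>M UU n"
  shows "(\<lambda>z. wp p n (F z) (V z)) \<in> borel_measurable M"
  using Wc_meas[OF assms(3,4), of p] by (simp add: wp_alt[OF assms(1,2)] Wc_def)

lemma tc_upper:
  assumes p: "0 < p" "p < 1" and nu: "prob_space \<nu>" "sets \<nu> = Pow (Xs n)"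
  shows "transport_cost (wp p n) \<nu> (UU n) \<le> ennreal (Hf p n (\<lambda>x. measure \<nu> {x}))
         \<and> 0 \<le> Hf p n (\<lambda>x. measure \<nu> {x})"
proof -
  define f where "f x = measure \<nu> {x}" for x
  have setsnu: "sets \<nu> = sets (count_space (Xs n))" using nu(2) by simp
  have spnu: "space \<nu> = Xs n" using sets_eq_imp_space_eq[OF setsnu] by simp
  have finnu: "finite_measure \<nu>" using nu(1) by (simp add: prob_space_def)
  have fnn: "\<And>x. x \<in> Xs n \<Longrightarrow> 0 \<le> f x" unfolding f_def by simp
  have fsum: "(\<Sum>x\<in>Xs n. f x) = 1"
  proof -
    have "measure \<nu> (Xs n) = (\<Sum>x\<in>Xs n. measure \<nu> {x})"
      by (rule finite_measure.finite_measure_eq_sum_singleton[OF finnu]) (auto simp: nu(2))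
    moreover have "measure \<nu> (Xs n) = 1" using prob_space.prob_space[OF nu(1)] spnu by simp
    ultimately show ?thesis unfolding f_def by simp
  qed
  obtain T where Tm: "T \<in> UU n \<rightarrow>\<^sub>M count_space (Xs n)"
    and Tf: "\<forall>x\<in>Xs n. emeasure (UU n) {u\<in>space (UU n). T u = x} = ennreal (f x)"
    and Tc: "(\<integral>\<^sup>+u. Wc p n (T u) u \<partial>UU n) \<le> ennreal (Hf p n f)"
    and Hn: "0 \<le> Hf p n f"
    using upper_T[OF p, of n f, OF fnn fsum] by blast
  have Tnu: "T \<in> UU n \<rightarrow>\<^sub>M \<nu>" using Tm measurable_cong_sets[OF refl setsnu] by blast
  define \<pi> where "\<pi> = distr (UU n) (\<nu> \<Otimes>\<^sub>M UU n) (\<lambda>u. (T u, u))"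
  have pm: "(\<lambda>u. (T u, u)) \<in> UU n \<rightarrow>\<^sub>M \<nu> \<Otimes>\<^sub>M UU n"
    using Tnu by (intro measurable_Pair) auto
  have dT: "distr (UU n) \<nu> T = \<nu>"
  proof (rule measure_eqI_finite[of _ "Xs n"])
    show "sets (distr (UU n) \<nu> T) = Pow (Xs n)" using nu(2) by simp
    show "sets \<nu> = Pow (Xs n)" by (rule nu(2))
    show "finite (Xs n)" by simp
    fix a assume a: "a \<in> Xs n"
    have "emeasure (distr (UU n) \<nu> T) {a} = emeasure (UU n) (T -` {a} \<inter> space (UU n))"
      using a nu(2) by (intro emeasure_distr[OF Tnu]) auto
    also have "T -` {a} \<inter> space (UU n) = {u\<in>space (UU n). T u = a}" by auto
    also have "emeasure (UU n) {u\<in>space (UU n). T u = a} = ennreal (f a)" using Tf a by simp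
    also have "\<dots> = emeasure \<nu> {a}"
      unfolding f_def using finite_measure.emeasure_eq_measure[OF finnu] by simp
    finally show "emeasure (distr (UU n) \<nu> T) {a} = emeasure \<nu> {a}" .
  qed
  have coup: "\<pi> \<in> couplings \<nu> (UU n)"
    unfolding couplings_def
  proof (intro CollectI conjI)
    show "sets \<pi> = sets (\<nu> \<Otimes>\<^sub>M UU n)" unfolding \<pi>_def by simp
    have "distr \<pi> \<nu> fst = distr (UU n) \<nu> (fst \<circ> (\<lambda>u. (T u, u)))"
      unfolding \<pi>_def by (rule distr_distr[OF measurable_fst pm])
    also have "fst \<circ> (\<lambda>u. (T u, u)) = T" by (simp add: comp_def)
    finally show "distr \<pi> \<nu> fst = \<nu>" using dT by simp
    have "distr \<pi> (UU n) snd = distr (UU n) (UU n) (snd \<circ> (\<lambda>u. (T u, u)))"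
      unfolding \<pi>_def by (rule distr_distr[OF measurable_snd pm])
    also have "snd \<circ> (\<lambda>u. (T u, u)) = (\<lambda>u. u)" by (simp add: comp_def)
    finally show "distr \<pi> (UU n) snd = UU n" by simp
  qed
  have fstm: "fst \<in> \<nu> \<Otimes>\<^sub>M UU n \<rightarrow>\<^sub>M count_space (Xs n)"
    using measurable_fst[of \<nu> "UU n"] measurable_cong_sets[OF refl setsnu] by blast
  have wm: "(\<lambda>z. wp p n (fst z) (snd z)) \<in> borel_measurable (\<nu> \<Otimes>\<^sub>M UU n)"
    by (rule wp_meas[OF p fstm measurable_snd])
  have "(\<integral>\<^sup>+z. wp p n (fst z) (snd z) \<partial>\<pi>) = (\<integral>\<^sup>+u. wp p n (T u) u \<partial>UU n)"
  proof -
    have wm': "(\<lambda>z. wp p n (fst z) (snd z)) \<in> borel_measurable (distr (UU n) (\<nu> \<Otimes>\<^sub>M UU n) (\<lambda>u. (T u, u)))"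
      using wm measurable_cong_sets[OF sets_distr refl] by blast
    show ?thesis unfolding \<pi>_def by (subst nn_integral_distr[OF pm wm']) simp
  qed
  also have "\<dots> = (\<integral>\<^sup>+u. Wc p n (T u) u \<partial>UU n)" by (simp add: wp_alt[OF p] Wc_def)
  finally have "(\<integral>\<^sup>+z. wp p n (fst z) (snd z) \<partial>\<pi>) \<le> ennreal (Hf p n f)" using Tc by simp
  then have "transport_cost (wp p n) \<nu> (UU n) \<le> ennreal (Hf p n f)"
    unfolding transport_cost_def using coup by (meson INF_lower2)
  then show ?thesis using Hn unfolding f_def by simp
qed

definition pf :: "(nat \<Rightarrow> real) \<Rightarrow> nat \<Rightarrow> (nat \<Rightarrow> real) \<Rightarrow> real" where
  "pf g n x = (\<Prod>i<n. if x i = 1 then g i else 1 - g i)"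

lemma pf_upd: "pf g (Suc n) (x(n := b)) = pf g n x * (if b = 1 then g n else 1 - g n)"
proof -
  have "(\<Prod>i<n. if (x(n := b)) i = 1 then g i else 1 - g i) = (\<Prod>i<n. if x i = 1 then g i else 1 - g i)"
    by (intro prod.cong) auto
  then show ?thesis unfolding pf_def by (simp add: prod.lessThan_Suc)
qed

lemma pf_nonneg: "(\<And>i. 0 \<le> g i \<and> g i \<le> 1) \<Longrightarrow> 0 \<le> pf g n x"
  unfolding pf_def by (intro prod_nonneg) auto

lemma pf_sum: "(\<Sum>x\<in>Xs n. pf g n x) = 1"
proof (induction n)
  case 0 then show ?case by (simp add: Xs_0 pf_def)
next
  case (Suc n)
  have "(\<Sum>x\<in>Xs (Suc n). pf g (Suc n) x) = (\<Sum>x\<in>Xs n. pf g n x * g n + pf g n x * (1 - g n))"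
    unfolding sum_Xs_Suc pf_upd by simp
  also have "\<dots> = (\<Sum>x\<in>Xs n. pf g n x)" by (simp add: algebra_simps)
  finally show ?case using Suc by simp
qed

lemma marg_pf: "marg n (pf g (Suc n)) = pf g n"
  unfolding marg_def by (rule ext) (simp add: pf_upd algebra_simps)

lemma Hf_prod:
  assumes p: "0 < p" "p < 1" and g: "\<And>i. 0 \<le> g i \<and> g i \<le> 1"
  shows "Hf p n (pf g n) = (\<Sum>i<n. Ip p (2 * g i - 1))"
proof (induction n)
  case 0 then show ?case by (simp add: Hf_def Xs_0 pf_def mprod_def)
next
  case (Suc n)
  have "Hf p (Suc n) (pf g (Suc n)) = Hf p n (pf g n)
     + (\<Sum>x\<in>Xs n. pf g n x * Ip p (2 * (pf g (Suc n) (x(n := 1)) / pf g n x) - 1))"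
    using Hf_chain[OF p, of n "pf g (Suc n)"] pf_nonneg[OF g] by (simp add: marg_pf)
  also have "(\<Sum>x\<in>Xs n. pf g n x * Ip p (2 * (pf g (Suc n) (x(n := 1)) / pf g n x) - 1))
      = (\<Sum>x\<in>Xs n. pf g n x * Ip p (2 * g n - 1))"
  proof (rule sum.cong[OF refl])
    fix x
    show "pf g n x * Ip p (2 * (pf g (Suc n) (x(n := 1)) / pf g n x) - 1) = pf g n x * Ip p (2 * g n - 1)"
      by (cases "pf g n x = 0") (simp_all add: pf_upd)
  qed
  also have "\<dots> = Ip p (2 * g n - 1)"
    using pf_sum[where g=g and n=n] by (simp add: sum_distrib_right[symmetric])
  finally show ?case using Suc by simp
qed

lemma prod_measures:
  assumes nui: "\<forall>i<n. prob_space (\<nu>i i) \<and> sets (\<nu>i i) = sets (count_space {-1, 1::real})"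
  shows "\<And>i. i < n \<Longrightarrow> measure (\<nu>i i) {-1} = 1 - measure (\<nu>i i) {1}"
    and "\<And>x. x \<in> Xs n \<Longrightarrow> measure (PiM {..<n} \<nu>i) {x}
           = pf (\<lambda>i. if i < n then measure (\<nu>i i) {1} else 0) n x"
proof -
  fix i assume i: "i < n"
  then interpret prob_space "\<nu>i i" using nui by auto
  have sp: "space (\<nu>i i) = {-1, 1}" using sets_eq_imp_space_eq[of "\<nu>i i" "count_space {-1, 1}"] nui i by simp
  have u: "{-1, 1} = {-1} \<union> {1::real}" by auto
  have "measure (\<nu>i i) {-1, 1} = measure (\<nu>i i) {-1} + measure (\<nu>i i) {1}"
    unfolding u by (rule finite_measure_Union) (use nui i in auto)
  moreover have "measure (\<nu>i i) {-1, 1} = 1" using prob_space sp by simp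
  ultimately show "measure (\<nu>i i) {-1} = 1 - measure (\<nu>i i) {1}" by simp
next
  fix x assume x: "x \<in> Xs n"
  define \<nu>' where "\<nu>' i = (if i < n then \<nu>i i else unifU)" for i
  have eqP: "PiM {..<n} \<nu>i = PiM {..<n} \<nu>'" by (rule PiM_cong) (auto simp: \<nu>'_def)
  interpret product_sigma_finite \<nu>'
    unfolding product_sigma_finite_def \<nu>'_def using nui prob_unifU
    by (auto intro: prob_space_imp_sigma_finite)
  have m1: "measure (\<nu>i i) {-1} = 1 - measure (\<nu>i i) {1}" if "i < n" for i
  proof -
    interpret prob_space "\<nu>i i" using nui that by auto
    have sp: "space (\<nu>i i) = {-1, 1}" using sets_eq_imp_space_eq[of "\<nu>i i" "count_space {-1, 1}"] nui that by simp
    have u: "{-1, 1} = {-1} \<union> {1::real}" by auto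
    have "measure (\<nu>i i) {-1, 1} = measure (\<nu>i i) {-1} + measure (\<nu>i i) {1}"
      unfolding u by (rule finite_measure_Union) (use nui that in auto)
    moreover have "measure (\<nu>i i) {-1, 1} = 1" using prob_space sp by simp
    ultimately show ?thesis by simp
  qed
  have "emeasure (PiM {..<n} \<nu>') (PiE {..<n} (\<lambda>i. {x i})) = (\<Prod>i<n. emeasure (\<nu>' i) {x i})"
    by (rule emeasure_PiM) (use Xs_comp[OF x] nui in \<open>auto simp: \<nu>'_def\<close>)
  also have "\<dots> = (\<Prod>i<n. ennreal (if x i = 1 then (if i < n then measure (\<nu>i i) {1} else 0) else 1 - (if i < n then measure (\<nu>i i) {1} else 0)))"
  proof (rule prod.cong[OF refl])
    fix i assume i: "i \<in> {..<n}"
    then interpret prob_space "\<nu>i i" using nui by auto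
    have "x i \<in> {-1, 1}" using Xs_comp[OF x] i by auto
    then show "emeasure (\<nu>' i) {x i} = ennreal (if x i = 1 then (if i < n then measure (\<nu>i i) {1} else 0) else 1 - (if i < n then measure (\<nu>i i) {1} else 0))"
      using i m1[of i] by (auto simp: \<nu>'_def emeasure_eq_measure)
  qed
  also have "\<dots> = ennreal (pf (\<lambda>i. if i < n then measure (\<nu>i i) {1} else 0) n x)"
    unfolding pf_def
  proof (rule prod_ennreal)
    fix i assume i: "i \<in> {..<n}"
    then interpret prob_space "\<nu>i i" using nui by auto
    show "0 \<le> (if x i = 1 then (if i < n then measure (\<nu>i i) {1} else 0) else 1 - (if i < n then measure (\<nu>i i) {1} else 0))"
      using i by auto
  qed
  finally have "emeasure (PiM {..<n} \<nu>i) {x} = ennreal (pf (\<lambda>i. if i < n then measure (\<nu>i i) {1} else 0) n x)"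
    using Xs_singleton[OF x] eqP by simp
  moreover have "0 \<le> pf (\<lambda>i. if i < n then measure (\<nu>i i) {1} else 0) n x"
    unfolding pf_def
  proof (rule prod_nonneg)
    fix i assume i: "i \<in> {..<n}"
    then interpret prob_space "\<nu>i i" using nui by auto
    show "0 \<le> (if x i = 1 then (if i < n then measure (\<nu>i i) {1} else 0) else 1 - (if i < n then measure (\<nu>i i) {1} else 0))"
      using i by auto
  qed
  ultimately show "measure (PiM {..<n} \<nu>i) {x} = pf (\<lambda>i. if i < n then measure (\<nu>i i) {1} else 0) n x"
    by (simp add: measure_def)
qed

lemma tc_lower_prod:
  assumes p: "0 < p" "p < 1"
    and nui: "\<forall>i<n. prob_space (\<nu>i i) \<and> sets (\<nu>i i) = sets (count_space {-1, 1::real})"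
  shows "ennreal (\<Sum>i<n. Ip p (2 * measure (\<nu>i i) {1} - 1)) \<le> transport_cost (wp p n) (PiM {..<n} \<nu>i) (UU n)"
  unfolding transport_cost_def
proof (rule INF_greatest)
  define \<nu> where "\<nu> = PiM {..<n} \<nu>i"
  fix \<pi> assume "\<pi> \<in> couplings (PiM {..<n} \<nu>i) (UU n)"
  then have s\<pi>: "sets \<pi> = sets (\<nu> \<Otimes>\<^sub>M UU n)" and d1: "distr \<pi> \<nu> fst = \<nu>" and d2: "distr \<pi> (UU n) snd = UU n"
    unfolding couplings_def \<nu>_def by auto
  have setsnu: "sets \<nu> = Pow (Xs n)" unfolding \<nu>_def by (rule sets_Xs_PiM) (use nui in auto)
  have setsnu': "sets \<nu> = sets (count_space (Xs n))" using setsnu by simp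
  have spnu: "space \<nu> = Xs n" using sets_eq_imp_space_eq[OF setsnu'] by simp
  have fstnu: "fst \<in> \<pi> \<rightarrow>\<^sub>M \<nu>" using measurable_fst measurable_cong_sets[OF s\<pi> refl] by blast
  have fstm: "fst \<in> \<pi> \<rightarrow>\<^sub>M count_space (Xs n)" using fstnu measurable_cong_sets[OF refl setsnu'] by blast
  have sndm: "snd \<in> \<pi> \<rightarrow>\<^sub>M UU n" using measurable_snd measurable_cong_sets[OF s\<pi> refl] by blast
  have low: "ennreal (Ip p (2 * measure (\<nu>i i) {1} - 1)) \<le> (\<integral>\<^sup>+z. cst p (fst z i) (snd z i) \<partial>\<pi>)"
    if i: "i \<in> {..<n}" for i
  proof -
    have i': "i < n" using i by simp
    interpret P: prob_space "\<nu>i i" using nui i' by auto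
    have mb: "emeasure \<pi> {z\<in>space \<pi>. fst z i = b} = ennreal (measure (\<nu>i i) {b})" if b: "b \<in> {-1, 1}" for b
    proof -
      have A: "{x\<in>space \<nu>. x i = b} \<in> sets \<nu>" using setsnu spnu by auto
      have "{z\<in>space \<pi>. fst z i = b} = fst -` {x\<in>space \<nu>. x i = b} \<inter> space \<pi>"
        using measurable_space[OF fstnu] by auto
      then have "emeasure \<pi> {z\<in>space \<pi>. fst z i = b} = emeasure (distr \<pi> \<nu> fst) {x\<in>space \<nu>. x i = b}"
        using emeasure_distr[OF fstnu A] by simp
      also have "\<dots> = emeasure \<nu> {x\<in>space \<nu>. x i = b}" using d1 by simp
      also have "{x\<in>space \<nu>. x i = b} = (\<lambda>x. x i) -` {b} \<inter> space \<nu>" by auto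
      also have "emeasure \<nu> \<dots> = emeasure (distr \<nu> (\<nu>i i) (\<lambda>x. x i)) {b}"
        by (rule emeasure_distr[symmetric]) (use i b nui in \<open>auto simp: \<nu>_def\<close>)
      also have "distr \<nu> (\<nu>i i) (\<lambda>x. x i) = \<nu>i i"
        unfolding \<nu>_def by (rule distr_PiM_component) (use nui i in auto)
      also have "emeasure (\<nu>i i) {b} = ennreal (measure (\<nu>i i) {b})" by (rule P.emeasure_eq_measure)
      finally show ?thesis .
    qed
    show ?thesis
    proof (rule cost1_lower[OF p])
      show "0 \<le> measure (\<nu>i i) {1}" by simp
      show "measure (\<nu>i i) {1} \<le> 1" by (rule P.prob_le_1)
      fix z assume "z \<in> space \<pi>"
      then have "fst z \<in> Xs n" using measurable_space[OF fstm] by simp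
      then show "fst z i \<in> {-1, 1}" using Xs_comp i' by blast
    next
      show "(\<lambda>z. fst z i) \<in> borel_measurable \<pi>" by (rule comp_meas[OF fstm i'])
      show "(\<lambda>z. snd z i) \<in> borel_measurable \<pi>" by (rule ucomp_meas[OF sndm i'])
      show "emeasure \<pi> {z\<in>space \<pi>. fst z i = 1} = ennreal (measure (\<nu>i i) {1})" using mb by simp
      show "emeasure \<pi> {z\<in>space \<pi>. fst z i = -1} = ennreal (1 - measure (\<nu>i i) {1})"
        using mb[of "-1"] prod_measures(1)[OF nui i'] by simp
      fix h :: "real \<Rightarrow> ennreal" assume h: "h \<in> borel_measurable borel"
      have ci: "(\<lambda>u. u i) \<in> UU n \<rightarrow>\<^sub>M unifU"
        unfolding UU_def by (rule measurable_component_singleton) (use i in auto)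
      have hu: "(\<lambda>u. h (u i)) \<in> borel_measurable (UU n)"
        using measurable_compose[OF ci] h measurable_cong_sets[OF sets_unifU refl] by blast
      have "(\<integral>\<^sup>+z. h (snd z i) \<partial>\<pi>) = (\<integral>\<^sup>+u. h (u i) \<partial>distr \<pi> (UU n) snd)"
        by (rule nn_integral_distr[symmetric, OF sndm]) (use hu measurable_cong_sets[OF sets_distr refl] in blast)
      also have "\<dots> = (\<integral>\<^sup>+u. h (u i) \<partial>UU n)" using d2 by simp
      also have "\<dots> = (\<integral>\<^sup>+u. h u \<partial>distr (UU n) unifU (\<lambda>u. u i))"
        by (rule nn_integral_distr[symmetric, OF ci]) (use h measurable_cong_sets[OF sets_distr refl] in simp)
      also have "distr (UU n) unifU (\<lambda>u. u i) = unifU"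
        unfolding UU_def by (rule distr_PiM_component) (use prob_unifU i in auto)
      finally show "(\<integral>\<^sup>+z. h (snd z i) \<partial>\<pi>) = (\<integral>\<^sup>+u. h u \<partial>unifU)" .
    qed
  qed
  have "ennreal (\<Sum>i<n. Ip p (2 * measure (\<nu>i i) {1} - 1)) = (\<Sum>i<n. ennreal (Ip p (2 * measure (\<nu>i i) {1} - 1)))"
  proof (rule sum_ennreal[symmetric])
    fix i assume i: "i \<in> {..<n}"
    then interpret P: prob_space "\<nu>i i" using nui by auto
    show "0 \<le> Ip p (2 * measure (\<nu>i i) {1} - 1)"
      by (rule Ip_nonneg[OF p]) (use P.prob_le_1[of "{1}"] in auto)
  qed
  also have "\<dots> \<le> (\<Sum>i<n. \<integral>\<^sup>+z. cst p (fst z i) (snd z i) \<partial>\<pi>)"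
    by (rule sum_mono) (rule low)
  also have "\<dots> = (\<integral>\<^sup>+z. (\<Sum>i<n. cst p (fst z i) (snd z i)) \<partial>\<pi>)"
    by (rule nn_integral_sum[symmetric]) (auto intro!: cst_meas2 comp_meas[OF fstm] ucomp_meas[OF sndm])
  also have "\<dots> = (\<integral>\<^sup>+z. wp p n (fst z) (snd z) \<partial>\<pi>)" by (simp add: wp_alt[OF p])
  finally show "ennreal (\<Sum>i<n. Ip p (2 * measure (\<nu>i i) {1} - 1)) \<le> (\<integral>\<^sup>+z. wp p n (fst z) (snd z) \<partial>\<pi>)" .
qed

theorem proposition2p3:
  fixes p :: real and n :: nat and \<nu> :: "(nat \<Rightarrow> real) measure"
  assumes "0 < p" and "p < 1"
    and "prob_space \<nu>"
    and "sets \<nu> = sets (PiM {..<n} (\<lambda>_. count_space {-1, 1}))"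
  shows "enn2ereal (transport_cost (wp p n) \<nu> (PiM {..<n} (\<lambda>_. unifU)))
           \<le> rel_entropy \<nu> (PiM {..<n} (\<lambda>_. mu_p p))
         \<and> ((\<exists>\<nu>i. (\<forall>i<n. prob_space (\<nu>i i) \<and> sets (\<nu>i i) = sets (count_space {-1, 1}))
               \<and> \<nu> = PiM {..<n} \<nu>i)
         \<longrightarrow> enn2ereal (transport_cost (wp p n) \<nu> (PiM {..<n} (\<lambda>_. unifU)))
             = rel_entropy \<nu> (PiM {..<n} (\<lambda>_. mu_p p)))"
proof -
  have p: "0 < p" "p < 1" using assms(1,2) .
  have setsnu: "sets \<nu> = Pow (Xs n)"
    using assms(4) by (simp add: Xs_count[symmetric])
  define H where "H = Hf p n (\<lambda>x. measure \<nu> {x})"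
  have UUeq: "PiM {..<n} (\<lambda>_. unifU) = UU n" by (simp add: UU_def)
  have RE: "rel_entropy \<nu> (PiM {..<n} (\<lambda>_. mu_p p)) = ereal H"
    unfolding H_def by (rule rel_entropy_eq[OF p assms(3) setsnu])
  have up: "transport_cost (wp p n) \<nu> (UU n) \<le> ennreal H" and Hnn: "0 \<le> H"
    using tc_upper[OF p assms(3) setsnu] unfolding H_def by auto
  have part1: "enn2ereal (transport_cost (wp p n) \<nu> (UU n)) \<le> ereal H"
    using up Hnn by (metis enn2ereal_ennreal less_eq_ennreal.rep_eq)
  have part2: "enn2ereal (transport_cost (wp p n) \<nu> (UU n)) = ereal H"
    if "\<exists>\<nu>i. (\<forall>i<n. prob_space (\<nu>i i) \<and> sets (\<nu>i i) = sets (count_space {-1, 1}))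
               \<and> \<nu> = PiM {..<n} \<nu>i"
  proof -
    from that obtain \<nu>i where nui: "\<forall>i<n. prob_space (\<nu>i i) \<and> sets (\<nu>i i) = sets (count_space {-1, 1::real})"
      and nueq: "\<nu> = PiM {..<n} \<nu>i" by blast
    define g where "g i = (if i < n then measure (\<nu>i i) {1} else 0)" for i
    have g01: "0 \<le> g i \<and> g i \<le> 1" for i
    proof (cases "i < n")
      case True
      then interpret prob_space "\<nu>i i" using nui by auto
      show ?thesis using True prob_le_1[of "{1}"] by (simp add: g_def)
    qed (simp add: g_def)
    have geq: "(\<lambda>i. if i < n then measure (\<nu>i i) {1} else 0) = g" by (simp add: g_def fun_eq_iff)
    have "H = Hf p n (pf g n)"
      unfolding H_def Hf_def
      by (intro sum.cong refl) (simp add: nueq prod_measures(2)[OF nui] geq)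
    also have "\<dots> = (\<Sum>i<n. Ip p (2 * g i - 1))" by (rule Hf_prod[OF p g01])
    also have "\<dots> = (\<Sum>i<n. Ip p (2 * measure (\<nu>i i) {1} - 1))"
      by (intro sum.cong refl) (simp add: g_def)
    finally have Hs: "H = (\<Sum>i<n. Ip p (2 * measure (\<nu>i i) {1} - 1))" .
    have "ennreal H \<le> transport_cost (wp p n) \<nu> (UU n)"
      unfolding Hs nueq by (rule tc_lower_prod[OF p nui])
    then have "transport_cost (wp p n) \<nu> (UU n) = ennreal H" using up by (rule antisym[rotated])
    then show ?thesis using Hnn by simp
  qed
  show ?thesis unfolding RE UUeq using part1 part2 by blast
qed

end
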